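(* Consider the polynomial vector field on $\mathbb{R}^2$ given by $\dot{x} = f_1(x,y)$, $\dot{y} = f_2(x,y)$, where $$f(x,y) = \begin{pmatrix} -2y(-x^4+2x^2y^2+y^4) \\ 2x(x^4+2x^2y^2-y^4)\end{pmatrix} - (x^2+y^2)\begin{pmatrix} 2x(x^4+2x^2y^2-y^4) \\ 2y(-x^4+2x^2y^2+y^4)\end{pmatrix}.$$ Then the origin is a globally asymptotically stable equilibrium of this system, but the system does not admit an analytic Lyapunov function even locally; i.e., there is no real-analytic function $p$ defined on a neighborhood $S$ of the origin with $p(0,0)=0$, $p(x,y)>0$ and $\langle \nabla p(x,y), f(x,y)\rangle < 0$ for all $(x,y)\in S\setminus\{(0,0)\}$.
   Context: For a system $\dot{\vec x}=f(\vec x)$ with $f(0)=0$, the origin is globally asymptotically stable if it is stable in the sense of Lyapunov (for every $\epsilon>0$ there is $\delta>0$ such that $\|\vec x(0)\|<\delta$ implies $\|\vec x(t)\|<\epsilon$ for all $t\ge 0$) and $\lim_{t\to\infty}\vec x(t)=0$ for every initial condition $\vec x(0)\in\mathbb{R}^2$. A local Lyapunov function is a continuously differentiable function $V$ vanishing at the origin with $V(\vec x)>0$ and $-\langle\nabla V(\vec x), f(\vec x)\rangle>0$ for all $\vec x\in S\setminus\{0\}$, where $S$ is some neighborhood of the origin. *)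

theory Defs
  imports "HOL-Analysis.Analysis"
begin

definition vf :: "real \<times> real \<Rightarrow> real \<times> real" where
  "vf z = (let x = fst z; y = snd z in
     ( -2*y*(- (x^4) + 2*x^2*y^2 + y^4) - (x^2+y^2)*(2*x*(x^4 + 2*x^2*y^2 - y^4)),
        2*x*(x^4 + 2*x^2*y^2 - y^4) - (x^2+y^2)*(2*y*(- (x^4) + 2*x^2*y^2 + y^4))))"

definition is_solution :: "(real \<Rightarrow> real \<times> real) \<Rightarrow> bool" where
  "is_solution \<phi> \<longleftrightarrow> (\<forall>t\<ge>0. (\<phi> has_vector_derivative vf (\<phi> t)) (at t within {0..}))"

definition globally_asymptotically_stable :: bool where
  "globally_asymptotically_stable \<longleftrightarrow>
     (\<forall>z0. \<exists>\<phi>. is_solution \<phi> \<and> \<phi> 0 = z0) \<and>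
     (\<forall>\<epsilon>>0. \<exists>\<delta>>0. \<forall>\<phi>. is_solution \<phi> \<and> norm (\<phi> 0) < \<delta> \<longrightarrow> (\<forall>t\<ge>0. norm (\<phi> t) < \<epsilon>)) \<and>
     (\<forall>\<phi>. is_solution \<phi> \<longrightarrow> (\<phi> \<longlongrightarrow> 0) at_top)"

text \<open>Real analyticity on a set in \<open>\<real>\<^sup>2\<close>: locally around every point the function is the
  sum of an (absolutely / unconditionally) convergent double power series.\<close>
definition real_analytic_on :: "(real \<times> real \<Rightarrow> real) \<Rightarrow> (real \<times> real) set \<Rightarrow> bool" where
  "real_analytic_on p S \<longleftrightarrow>
     (\<forall>a\<in>S. \<exists>r>0. \<exists>c :: nat \<Rightarrow> nat \<Rightarrow> real. \<forall>z\<in>ball a r.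
        ((\<lambda>(i,j). c i j * (fst z - fst a)^i * (snd z - snd a)^j) has_sum p z) UNIV)"

end

theory Submission
  imports Defs "HOL-Computational_Algebra.Polynomial"
begin

definition hp :: "(nat \<Rightarrow> nat \<Rightarrow> real) \<Rightarrow> nat \<Rightarrow> real \<times> real \<Rightarrow> real" where
  "hp c n z = (\<Sum>i\<le>n. c i (n-i) * fst z ^ i * snd z ^ (n-i))"

definition dhp :: "(nat \<Rightarrow> nat \<Rightarrow> real) \<Rightarrow> nat \<Rightarrow> real \<times> real \<Rightarrow> real \<times> real \<Rightarrow> real" where
  "dhp c n z h = (\<Sum>i\<le>n. c i (n-i) * (real i * fst z ^ (i-1) * snd z ^ (n-i) * fst h
       + real (n-i) * fst z ^ i * snd z ^ (n-i-1) * snd h))"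

definition beta :: "(nat \<Rightarrow> nat \<Rightarrow> real) \<Rightarrow> nat \<Rightarrow> real" where
  "beta c n = (\<Sum>i\<le>n. \<bar>c i (n-i)\<bar>)"

lemma abs_fst_le: "\<bar>fst (z::real\<times>real)\<bar> \<le> norm z"
  using norm_fst_le[of "fst z" "snd z"] by simp
lemma abs_snd_le: "\<bar>snd (z::real\<times>real)\<bar> \<le> norm z"
  using norm_snd_le[of "snd z" "fst z"] by simp

lemma beta_nonneg: "beta c n \<ge> 0"
  unfolding beta_def by (intro sum_nonneg) auto

lemma hp_has_derivative: "(hp c n has_derivative dhp c n z) (at z within S)"
proof -
  have "((\<lambda>w. c i (n-i) * fst w ^ i * snd w ^ (n-i)) has_derivative
     (\<lambda>h. c i (n-i) * (real i * fst z ^ (i-1) * snd z ^ (n-i) * fst h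
       + real (n-i) * fst z ^ i * snd z ^ (n-i-1) * snd h))) (at z within S)" for i
    by (auto intro!: derivative_eq_intros simp: algebra_simps)
  note * = this
  show ?thesis unfolding hp_def dhp_def[abs_def]
    by (rule has_derivative_sum) (rule *)
qed

lemma hp_bound: "\<bar>hp c n z\<bar> \<le> beta c n * norm z ^ n"
proof -
  have "\<bar>hp c n z\<bar> \<le> (\<Sum>i\<le>n. \<bar>c i (n-i) * fst z ^ i * snd z ^ (n-i)\<bar>)"
    unfolding hp_def by (rule sum_abs)
  also have "\<dots> \<le> (\<Sum>i\<le>n. \<bar>c i (n-i)\<bar> * norm z ^ n)"
  proof (intro sum_mono)
    fix i assume i: "i \<in> {..n}"
    have a: "\<bar>fst z\<bar> \<le> norm z" "\<bar>snd z\<bar> \<le> norm z"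
      by (simp_all add: abs_fst_le abs_snd_le)
    have "\<bar>fst z ^ i * snd z ^ (n-i)\<bar> \<le> norm z ^ i * norm z ^ (n-i)"
      unfolding abs_mult power_abs by (intro mult_mono power_mono a) auto
    also have "\<dots> = norm z ^ n" using i by (simp flip: power_add)
    finally show "\<bar>c i (n-i) * fst z ^ i * snd z ^ (n-i)\<bar> \<le> \<bar>c i (n-i)\<bar> * norm z ^ n"
      by (simp add: abs_mult mult.assoc mult_left_mono)
  qed
  finally show ?thesis by (simp add: beta_def sum_distrib_right)
qed

lemma dhp_bound: "\<bar>dhp c n z h\<bar> \<le> real n * beta c n * norm z ^ (n-1) * norm h"
proof -
  have a: "\<bar>fst z\<bar> \<le> norm z" "\<bar>snd z\<bar> \<le> norm z" "\<bar>fst h\<bar> \<le> norm h" "\<bar>snd h\<bar> \<le> norm h"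
    by (simp_all add: abs_fst_le abs_snd_le)
  have "\<bar>dhp c n z h\<bar> \<le> (\<Sum>i\<le>n. \<bar>c i (n-i) * (real i * fst z ^ (i-1) * snd z ^ (n-i) * fst h
       + real (n-i) * fst z ^ i * snd z ^ (n-i-1) * snd h)\<bar>)"
    unfolding dhp_def by (rule sum_abs)
  also have "\<dots> \<le> (\<Sum>i\<le>n. \<bar>c i (n-i)\<bar> * (real n * norm z ^ (n-1) * norm h))"
  proof (intro sum_mono)
    fix i assume i: "i \<in> {..n}"
    have t1: "\<bar>real i * fst z ^ (i-1) * snd z ^ (n-i) * fst h\<bar> \<le> real i * (norm z ^ (n-1) * norm h)"
    proof (cases "i = 0")
      case False
      have "\<bar>fst z ^ (i-1) * snd z ^ (n-i) * fst h\<bar> \<le> norm z ^ (i-1) * norm z ^ (n-i) * norm h"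
        unfolding abs_mult power_abs by (intro mult_mono power_mono a) auto
      also have "\<dots> = norm z ^ (n-1) * norm h" using i False by (simp flip: power_add)
      finally show ?thesis by (simp add: abs_mult mult.assoc mult_left_mono)
    qed simp
    have t2: "\<bar>real (n-i) * fst z ^ i * snd z ^ (n-i-1) * snd h\<bar> \<le> real (n-i) * (norm z ^ (n-1) * norm h)"
    proof (cases "i = n")
      case False
      have "\<bar>fst z ^ i * snd z ^ (n-i-1) * snd h\<bar> \<le> norm z ^ i * norm z ^ (n-i-1) * norm h"
        unfolding abs_mult power_abs by (intro mult_mono power_mono a) auto
      also have "\<dots> = norm z ^ (n-1) * norm h" using i False by (simp flip: power_add)
      finally show ?thesis by (simp add: abs_mult mult.assoc mult_left_mono)
    qed simp
    have "\<bar>real i * fst z ^ (i-1) * snd z ^ (n-i) * fst h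
       + real (n-i) * fst z ^ i * snd z ^ (n-i-1) * snd h\<bar> \<le> real i * (norm z ^ (n-1) * norm h) + real (n-i) * (norm z ^ (n-1) * norm h)"
      using t1 t2 abs_triangle_ineq[of "real i * fst z ^ (i-1) * snd z ^ (n-i) * fst h" "real (n-i) * fst z ^ i * snd z ^ (n-i-1) * snd h"]
      by linarith
    also have "\<dots> = (real i + real (n-i)) * (norm z ^ (n-1) * norm h)" by (simp only: distrib_right)
    also have "real i + real (n-i) = real n" using i by simp
    finally show "\<bar>c i (n-i) * (real i * fst z ^ (i-1) * snd z ^ (n-i) * fst h
       + real (n-i) * fst z ^ i * snd z ^ (n-i-1) * snd h)\<bar> \<le> \<bar>c i (n-i)\<bar> * (real n * norm z ^ (n-1) * norm h)"
      by (simp add: abs_mult mult_left_mono)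
  qed
  also have "\<dots> = (\<Sum>i\<le>n. \<bar>c i (n-i)\<bar>) * (real n * norm z ^ (n-1) * norm h)"
    by (rule sum_distrib_right[symmetric])
  finally show ?thesis by (simp add: beta_def mult_ac)
qed

lemma hp_scale: "hp c n (t *\<^sub>R z) = t ^ n * hp c n z"
  unfolding hp_def sum_distrib_left
proof (intro sum.cong refl)
  fix i assume i: "i \<in> {..n}"
  then have "t^n = t^i * t^(n-i)" by (simp flip: power_add)
  then show "c i (n - i) * fst (t *\<^sub>R z) ^ i * snd (t *\<^sub>R z) ^ (n - i) = t ^ n * (c i (n - i) * fst z ^ i * snd z ^ (n - i))"
    by (simp add: power_mult_distrib)
qed

lemma dhp_term_scale:
  fixes t x y fh sh :: real
  assumes that: "i \<le> n"
  shows "real i * (t * x) ^ (i-1) * (t * y) ^ (n-i) * fh + real (n-i) * (t * x) ^ i * (t * y) ^ (n-i-1) * sh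
    = t^(n-1) * (real i * x ^ (i-1) * y ^ (n-i) * fh + real (n-i) * x ^ i * y ^ (n-i-1) * sh)"
proof -
  have e1: "real i * (t * x) ^ (i-1) * (t * y) ^ (n-i) = t^(n-1) * (real i * x ^ (i-1) * y ^ (n-i))"
  proof (cases "i = 0")
    case False
    then have "t^(n-1) = t^(i-1) * t^(n-i)" using that by (simp flip: power_add)
    then show ?thesis by (simp add: power_mult_distrib)
  qed simp
  have e2: "real (n-i) * (t * x) ^ i * (t * y) ^ (n-i-1) = t^(n-1) * (real (n-i) * x ^ i * y ^ (n-i-1))"
  proof (cases "i = n")
    case False
    then have "t^(n-1) = t^i * t^(n-i-1)" using that by (simp flip: power_add)
    then show ?thesis by (simp add: power_mult_distrib)
  qed simp
  show ?thesis unfolding e1 e2 by (simp only: distrib_left mult.assoc)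
qed

lemma dhp_scale: "dhp c n (t *\<^sub>R z) h = t ^ (n-1) * dhp c n z h"
  unfolding dhp_def sum_distrib_left
  by (intro sum.cong refl) (simp only: fst_scaleR snd_scaleR real_scaleR_def dhp_term_scale atMost_iff mult.left_commute[of "t^(n-1)"])

lemma euler_aux:
  fixes P Q x y xi yi a b c ri rni rn :: real
  assumes "P * x = ri * xi" "Q * y = rni * yi" "rn = ri + rni"
  shows "c * (P * yi * (a*x - b*y) + xi * Q * (a*y + b*x)) = a * rn * (c * xi * yi) + b * (c * (P * yi * (-y) + xi * Q * x))"
proof -
  have "c * (P * yi * (a*x - b*y) + xi * Q * (a*y + b*x)) = c*a*(P*x)*yi + c*a*xi*(Q*y) + b*(c*(P * yi * (-y) + xi * Q * x))"
    by (simp add: algebra_simps)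
  also have "\<dots> = a * rn * (c * xi * yi) + b * (c * (P * yi * (-y) + xi * Q * x))"
    unfolding assms by (simp add: algebra_simps)
  finally show ?thesis .
qed

lemma dhp_euler: "dhp c n z (a *\<^sub>R z + b *\<^sub>R (- snd z, fst z)) = a * real n * hp c n z + b * dhp c n z (- snd z, fst z)"
  unfolding dhp_def hp_def sum_distrib_left sum.distrib[symmetric]
proof (intro sum.cong refl)
  fix i assume i: "i \<in> {..n}"
  have e1: "(real i * fst z ^ (i-1)) * fst z = real i * fst z ^ i"
    by (cases i) auto
  have e2: "(real (n-i) * snd z ^ (n-i-1)) * snd z = real (n-i) * snd z ^ (n-i)"
    by (cases "n-i") auto
  have e3: "real n = real i + real (n-i)" using i by simp
  note * = euler_aux[OF e1 e2 e3, of "c i (n-i)" a b]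
  show "c i (n - i) * (real i * fst z ^ (i - 1) * snd z ^ (n - i) * fst (a *\<^sub>R z + b *\<^sub>R (- snd z, fst z)) +
          real (n - i) * fst z ^ i * snd z ^ (n - i - 1) * snd (a *\<^sub>R z + b *\<^sub>R (- snd z, fst z))) =
        a * real n * (c i (n - i) * fst z ^ i * snd z ^ (n - i)) +
        b * (c i (n - i) * (real i * fst z ^ (i - 1) * snd z ^ (n - i) * fst (- snd z, fst z) +
          real (n - i) * fst z ^ i * snd z ^ (n - i - 1) * snd (- snd z, fst z)))"
    using * by (simp add: mult_ac)
qed

lemma group_gen:
  fixes f :: "nat \<times> nat \<Rightarrow> real"
  assumes "(f has_sum s) UNIV"
  shows "(\<lambda>n. \<Sum>i\<le>n. f (i, n-i)) sums s"
proof -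
  define g where "g = (\<lambda>q::nat\<times>nat. (snd q, fst q - snd q))"
  have bij: "bij_betw g (Sigma UNIV (\<lambda>n. {..n})) UNIV"
    unfolding g_def
    by (rule bij_betw_byWitness[where f'="\<lambda>q. (fst q + snd q, fst q)"]) force+
  have h1: "((\<lambda>q. f (g q)) has_sum s) (Sigma UNIV (\<lambda>n. {..n}))"
    using assms by (simp only: has_sum_reindex_bij_betw[OF bij])
  have h2: "((\<lambda>i. f (g (n, i))) has_sum (\<Sum>i\<le>n. f (i, n-i))) {..n}" for n
    using has_sum_finite[of "{..n}" "\<lambda>i. f (i, n-i)"] by (simp add: g_def)
  have "((\<lambda>n. \<Sum>i\<le>n. f (i, n-i)) has_sum s) UNIV"
    by (rule has_sum_SigmaD[OF h1 h2])
  then show ?thesis by (rule has_sum_imp_sums)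
qed

lemma group_hp:
  assumes "((\<lambda>(i,j). c i j * x^i * y^j) has_sum s) UNIV"
  shows "(\<lambda>n. hp c n (x,y)) sums s"
  using group_gen[OF assms] by (simp add: hp_def)

lemma summable_n_times:
  fixes b :: "nat \<Rightarrow> real"
  assumes sm: "summable (\<lambda>n. b n * R^n)" and b: "\<And>n. b n \<ge> 0" and s: "0 \<le> s" "s < R"
  shows "summable (\<lambda>n. real n * b n * s^n)"
proof -
  have R: "R > 0" using s by linarith
  have "(\<lambda>n. of_nat n * (s/R) ^ n) \<longlonglongrightarrow> (0::real)"
    by (rule powser_times_n_limit_0) (use s R in auto)
  from LIMSEQ_D[OF this, of 1] obtain N where N: "\<And>n. n \<ge> N \<Longrightarrow> \<bar>real n * (s/R)^n\<bar> < 1"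
    by auto
  show ?thesis
  proof (rule summable_comparison_test'[OF sm])
    fix n assume "N \<le> n"
    then have le: "real n * (s/R)^n \<le> 1" using N by fastforce
    have "norm (real n * b n * s^n) = b n * R^n * (real n * (s/R)^n)"
      using b[of n] s R by (simp add: power_divide abs_mult)
    also have "\<dots> \<le> b n * R^n * 1"
      by (intro mult_left_mono le) (use b R in auto)
    finally show "norm (real n * b n * s^n) \<le> b n * R^n" by simp
  qed
qed

lemma analytic_deriv:
  fixes p :: "real \<times> real \<Rightarrow> real" and \<sigma> :: real
  assumes sm: "summable (\<lambda>n. real n * beta c n * \<sigma>^n)" and \<sigma>: "\<sigma> > 0"
    and sums: "\<And>z. z \<in> ball 0 \<sigma> \<Longrightarrow> (\<lambda>n. hp c n z) sums p z"
    and z: "z \<in> ball 0 \<sigma>"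
  shows "(p has_derivative (\<lambda>h. \<Sum>n. dhp c n z h)) (at z)"
proof -
  define B where "B n = real n * beta c n * \<sigma>^(n-1)" for n
  have smB: "summable B"
  proof -
    have eq: "(\<lambda>n. (real n * beta c n * \<sigma>^n) * (1/\<sigma>)) = B"
      unfolding B_def using \<sigma> by (intro ext, case_tac n) auto
    have "summable (\<lambda>n. (real n * beta c n * \<sigma>^n) * (1/\<sigma>))" by (rule summable_mult2[OF sm])
    then show ?thesis by (simp only: eq)
  qed
  have Bnn: "B n \<ge> 0" for n unfolding B_def using beta_nonneg \<sigma> by auto
  have bnd: "\<bar>dhp c n x h\<bar> \<le> B n * norm h" if "x \<in> ball 0 \<sigma>" for n x h
  proof -
    have "\<bar>dhp c n x h\<bar> \<le> real n * beta c n * norm x ^ (n-1) * norm h" by (rule dhp_bound)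
    also have "\<dots> \<le> real n * beta c n * \<sigma> ^ (n-1) * norm h"
      using that beta_nonneg[of c n]
      by (intro mult_right_mono mult_left_mono power_mono) auto
    finally show ?thesis by (simp add: B_def)
  qed
  have smd: "summable (\<lambda>n. dhp c n x h)" if "x \<in> ball 0 \<sigma>" for x h
    by (rule summable_comparison_test'[where g="\<lambda>n. B n * norm h"]) 
       (use bnd[OF that] summable_mult2[OF smB] in auto)
  have "\<exists>g. \<forall>x\<in>ball 0 \<sigma>. (\<lambda>n. hp c n x) sums (g x) \<and> (g has_derivative (\<lambda>h. \<Sum>n. dhp c n x h)) (at x within ball 0 \<sigma>)"
  proof (rule has_derivative_series[where f'="dhp c"])
    show "convex (ball (0::real\<times>real) \<sigma>)" by simp
    show "\<And>n x. x \<in> ball 0 \<sigma> \<Longrightarrow> (hp c n has_derivative dhp c n x) (at x within ball 0 \<sigma>)"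
      by (rule hp_has_derivative)
    show "(0::real\<times>real) \<in> ball 0 \<sigma>" using \<sigma> by simp
    show "(\<lambda>n. hp c n 0) sums p 0" using sums \<sigma> by simp
    fix e :: real assume e: "e > 0"
    from suminf_exist_split[OF e smB] obtain N where N: "\<And>n. n \<ge> N \<Longrightarrow> norm (\<Sum>i. B (i + n)) < e"
      by auto
    show "\<forall>\<^sub>F n in sequentially. \<forall>x\<in>ball 0 \<sigma>. \<forall>h. norm ((\<Sum>i<n. dhp c i x h) - (\<Sum>n. dhp c n x h)) \<le> e * norm h"
      unfolding eventually_sequentially
    proof (intro exI[of _ N] allI impI ballI)
      fix n x h assume n: "N \<le> n" and x: "x \<in> ball (0::real\<times>real) \<sigma>"
      have "(\<Sum>n. dhp c n x h) = (\<Sum>i. dhp c (i + n) x h) + (\<Sum>i<n. dhp c i x h)"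
        by (rule suminf_split_initial_segment[OF smd[OF x]])
      then have "norm ((\<Sum>i<n. dhp c i x h) - (\<Sum>n. dhp c n x h)) = \<bar>\<Sum>i. dhp c (i + n) x h\<bar>"
        by simp
      also have "\<dots> \<le> (\<Sum>i. B (i + n) * norm h)"
      proof -
        have s1: "summable (\<lambda>i. B (i + n) * norm h)"
          using summable_mult2[OF smB, of "norm h"] by (subst summable_iff_shift) simp
        have s2: "summable (\<lambda>i. norm (dhp c (i + n) x h))"
          by (rule summable_comparison_test'[OF s1]) (use bnd[OF x] in auto)
        have "\<bar>\<Sum>i. dhp c (i + n) x h\<bar> \<le> (\<Sum>i. norm (dhp c (i + n) x h))"
          using summable_norm[OF s2] by simp
        also have "\<dots> \<le> (\<Sum>i. B (i + n) * norm h)"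
          by (rule suminf_le[OF _ s2 s1]) (use bnd[OF x] in auto)
        finally show ?thesis .
      qed
      also have "\<dots> = (\<Sum>i. B (i + n)) * norm h"
        by (rule suminf_mult2[symmetric]) (use smB in simp)
      also have "\<dots> \<le> e * norm h"
        using N[OF n] by (intro mult_right_mono) auto
      finally show "norm ((\<Sum>i<n. dhp c i x h) - (\<Sum>n. dhp c n x h)) \<le> e * norm h" .
    qed
  qed
  then obtain g where g: "\<And>x. x \<in> ball 0 \<sigma> \<Longrightarrow> (\<lambda>n. hp c n x) sums (g x) \<and> (g has_derivative (\<lambda>h. \<Sum>n. dhp c n x h)) (at x within ball 0 \<sigma>)"
    by blast
  have eq: "g x = p x" if "x \<in> ball 0 \<sigma>" for x using g[OF that] sums[OF that] sums_unique2 by blast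
  have dg: "(g has_derivative (\<lambda>h. \<Sum>n. dhp c n z h)) (at z)"
    using g[OF z] at_within_open[of z "ball 0 \<sigma>"] z by auto
  show ?thesis
    by (rule has_derivative_transform_within_open[OF dg, where s="ball 0 \<sigma>"]) (use z eq in auto)
qed

lemma dvd_pow_diff: "(q::'a::comm_ring_1) dvd a - b \<Longrightarrow> q dvd a^n - b^n"
proof (induction n)
  case (Suc n)
  have "a^Suc n - b^Suc n = a*(a^n - b^n) + (a-b)*b^n" by (simp add: algebra_simps)
  with Suc show ?case by (metis dvd_add dvd_mult dvd_mult2)
qed simp

lemma poly_contra:
  fixes G :: "real poly" and K :: real
  assumes m: "m \<ge> 1" and eq: "\<And>x. poly G x * (x^2+1)^m = K * (x^4+1)^m"
  shows "K = 0"
proof (rule ccontr)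
  assume K: "K \<noteq> 0"
  define q :: "real poly" where "q = [:1,0,1:]"
  define w :: "real poly" where "w = [:1,0,0,0,1:]"
  have pq: "poly q x = x^2+1" for x by (simp add: q_def power2_eq_square)
  have pw: "poly w x = x^4+1" for x by (simp add: w_def power4_eq_xxxx)
  have "poly (G * q^m) = poly (smult K (w^m))"
    by (rule ext) (simp add: pq pw eq)
  then have e1: "G * q^m = smult K (w^m)" by (simp only: poly_eq_poly_eq_iff)
  have "poly (w - [:2:]) = poly (q * [:-1,0,1:])"
    by (rule ext) (simp add: q_def w_def algebra_simps power4_eq_xxxx)
  then have "w - [:2:] = q * [:-1,0,1:]" by (simp only: poly_eq_poly_eq_iff)
  then have d1: "q dvd w^m - [:2:]^m" by (intro dvd_pow_diff) (metis dvd_triv_left)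
  have d2: "q dvd smult K (w^m)"
  proof -
    have "q dvd q^m" using m by (simp add: dvd_power)
    then have "q dvd G * q^m" by simp
    then show ?thesis using e1 by simp
  qed
  have "q dvd smult K (w^m) - smult K (w^m - [:2:]^m)"
    using d1 d2 by (simp add: dvd_diff dvd_smult)
  then have d3: "q dvd smult K ([:2:]^m)" by (simp add: smult_diff_right)
  have nz: "smult K ([:2:]^m) \<noteq> 0" using K by simp
  have "degree q \<le> degree (smult K ([:2:]^m))" by (rule dvd_imp_degree_le[OF d3 nz])
  also have "\<dots> \<le> degree (([:2:]::real poly)^m)" by simp
  also have "\<dots> \<le> 0" using degree_power_le[of "[:2::real:]" m] by simp
  finally show False by (simp add: q_def)
qed

definition f5 :: "real \<times> real \<Rightarrow> real \<times> real" where
  "f5 z = (let x = fst z; y = snd z in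
     (-2*y*(- (x^4) + 2*x^2*y^2 + y^4), 2*x*(x^4 + 2*x^2*y^2 - y^4)))"

lemma f5_decomp: "f5 z = (4 * fst z * snd z * (fst z^2 - snd z^2)) *\<^sub>R z + (2*(fst z^4 + snd z^4)) *\<^sub>R (- snd z, fst z)"
  by (simp add: f5_def Let_def prod_eq_iff algebra_simps power2_eq_square power4_eq_xxxx)

lemma dhp_linear: "bounded_linear (dhp c n z)"
  using hp_has_derivative[of c n z UNIV] has_derivative_bounded_linear by blast

lemma norm_cis2: "norm (cos t, sin (t::real)) = 1"
  by (simp add: norm_Pair)

lemma sq_sum_le: "(p + q)^2 \<le> 2 * (p^2 + q^2)" for p q :: real
  using zero_le_power2[of "p - q"] by (simp add: power2_diff power2_sum algebra_simps)

lemma polar_part: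
  assumes Q: "\<And>u. norm u = 1 \<Longrightarrow> dhp c d u (f5 u) \<le> 0"
  shows "\<exists>K. (\<forall>u. norm u = 1 \<longrightarrow> hp c d u = K * exp (real d / 2 * ln (2*(fst u^4 + snd u^4))))
             \<and> (odd d \<longrightarrow> K = 0)"
proof -
  define phi where "phi (t::real) = hp c d (cos t, sin t)" for t
  define phi' where "phi' (t::real) = dhp c d (cos t, sin t) (- sin t, cos t)" for t
  define a where "a (t::real) = 4 * cos t * sin t * (cos t ^ 2 - sin t ^ 2)" for t
  define b where "b (t::real) = 2 * (cos t ^ 4 + sin t ^ 4)" for t
  define E where "E (t::real) = exp (- (real d / 2) * ln (b t))" for t
  define psi where "psi (t::real) = phi t * E t" for t
  have bpos: "b t > 0" for t
  proof -
    have e: "(cos t ^ 2 + sin t ^ 2)^2 = 1" by simp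
    have "(cos t ^ 2 + sin t ^ 2)^2 \<le> 2 * ((cos t^2)^2 + (sin t^2)^2)"
      by (rule sq_sum_le)
    then have "1 \<le> 2 * ((cos t^2)^2 + (sin t^2)^2)" using e by simp
    moreover have "b t = 2 * ((cos t^2)^2 + (sin t^2)^2)" by (simp add: b_def flip: power_mult)
    ultimately show ?thesis by simp
  qed
  have dphi: "(phi has_real_derivative phi' t) (at t)" for t
  proof -
    have bl: "bounded_linear (dhp c d (cos t, sin t))" by (rule dhp_linear)
    have h1: "((\<lambda>t. (cos t, sin t)) has_derivative (\<lambda>s. s *\<^sub>R (- sin t, cos t))) (at t)"
      by (auto intro!: derivative_eq_intros simp: prod_eq_iff)
    have "((\<lambda>t. hp c d (cos t, sin t)) has_derivative (\<lambda>s. dhp c d (cos t, sin t) (s *\<^sub>R (- sin t, cos t)))) (at t)"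
      using has_derivative_compose[OF h1 hp_has_derivative] by (simp add: o_def)
    moreover have "(\<lambda>s. dhp c d (cos t, sin t) (s *\<^sub>R (- sin t, cos t))) = (\<lambda>s. phi' t * s)"
      by (rule ext) (subst linear_scale[OF bounded_linear.linear[OF bl]], simp add: phi'_def)
    ultimately show ?thesis unfolding phi_def[abs_def] has_field_derivative_def by simp
  qed
  have db: "(b has_real_derivative (- 2 * a t)) (at t)" for t
    unfolding b_def[abs_def] a_def
    by (auto intro!: derivative_eq_intros simp: algebra_simps power2_eq_square power3_eq_cube)
  have dE: "(E has_real_derivative (E t * (- (real d / 2) * (- 2 * a t / b t)))) (at t)" for t
    unfolding E_def[abs_def]
    by (rule derivative_eq_intros db refl | use bpos in force)+
  have Qt: "a t * real d * phi t + b t * phi' t \<le> 0" for t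
  proof -
    have "dhp c d (cos t, sin t) (f5 (cos t, sin t)) \<le> 0" by (rule Q[OF norm_cis2])
    also have "dhp c d (cos t, sin t) (f5 (cos t, sin t)) = a t * real d * phi t + b t * phi' t"
      unfolding f5_decomp
      using dhp_euler[of c d "(cos t, sin t)" "4 * cos t * sin t * (cos t^2 - sin t^2)" "2*(cos t^4 + sin t^4)"]
      by (simp add: a_def b_def phi_def phi'_def)
    finally show ?thesis .
  qed
  have dpsi: "(psi has_real_derivative (E t / b t * (a t * real d * phi t + b t * phi' t))) (at t)" for t
  proof -
    have "(psi has_real_derivative (phi' t * E t + E t * (- (real d / 2) * (- 2 * a t / b t)) * phi t)) (at t)"
      unfolding psi_def[abs_def] by (rule DERIV_mult[OF dphi dE])
    moreover have "phi' t * E t + E t * (- (real d / 2) * (- 2 * a t / b t)) * phi t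
        = E t / b t * (a t * real d * phi t + b t * phi' t)"
      using bpos[of t] by (simp add: field_simps)
    ultimately show ?thesis by simp
  qed
  have dpsi_le: "E t / b t * (a t * real d * phi t + b t * phi' t) \<le> 0" for t
    using Qt[of t] bpos[of t] by (intro mult_nonneg_nonpos) (auto simp: E_def)
  have mono: "psi y \<le> psi x" if "x \<le> y" for x y
    using DERIV_nonpos_imp_nonincreasing[OF that, of psi] dpsi dpsi_le by blast
  have p2: "psi (2*pi) = psi 0" by (simp add: psi_def phi_def E_def b_def)
  have const: "psi t = psi 0" if "0 \<le> t" "t \<le> 2*pi" for t
    using mono[of 0 t] mono[of t "2*pi"] that p2 by linarith
  define K where "K = psi 0"
  have main: "hp c d u = K * exp (real d / 2 * ln (2*(fst u^4 + snd u^4)))" if "norm u = 1" for u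
  proof -
    have "fst u ^2 + snd u ^2 = 1" using that by (simp add: norm_prod_def power2_eq_square)
    then obtain t where t: "0 \<le> t" "t < 2*pi" "fst u = cos t" "snd u = sin t"
      using sincos_total_2pi by metis
    have u: "u = (cos t, sin t)" using t by (simp add: prod_eq_iff)
    have "psi t = K" using const[of t] t by (simp add: K_def)
    then have "phi t * E t = K" by (simp add: psi_def)
    moreover have "E t * exp (real d / 2 * ln (b t)) = 1"
      by (simp add: E_def flip: exp_add)
    ultimately have "phi t = K * exp (real d / 2 * ln (b t))"
      by (metis mult.assoc mult.commute mult_1)
    then show ?thesis by (simp add: u phi_def b_def)
  qed
  have odd: "K = 0" if "odd d"
  proof -
    have "psi pi = K" using const[of pi] by (simp add: K_def)
    moreover have "phi pi = - phi 0"
    proof -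
      have "phi pi = hp c d ((-1) *\<^sub>R (1, 0))" by (simp add: phi_def)
      also have "\<dots> = (-1)^d * hp c d (1,0)" by (rule hp_scale)
      also have "\<dots> = - phi 0" using that by (simp add: phi_def)
      finally show ?thesis .
    qed
    moreover have "E pi = E 0" by (simp add: E_def b_def)
    ultimately have "- K = K" by (simp add: psi_def K_def)
    then show ?thesis by simp
  qed
  show ?thesis using main odd by blast
qed

lemma vf_scale: "vf (t *\<^sub>R u) = t^5 *\<^sub>R f5 u + t^7 *\<^sub>R (vf u - f5 u)"
  unfolding vf_def f5_def Let_def by (simp add: prod_eq_iff, intro conjI; algebra)

lemma hp_below: assumes "\<forall>i\<le>n. c i (n-i) = 0" shows "hp c n z = 0" "dhp c n z h = 0"
  using assms by (simp_all add: hp_def dhp_def)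

lemma key_sign:
  fixes p :: "real \<times> real \<Rightarrow> real" and \<sigma> \<epsilon> :: real
  assumes sm1: "summable (\<lambda>n. real n * beta c n * \<sigma>^n)" and \<sigma>: "\<sigma> > 0" and \<epsilon>: "\<epsilon> > 0"
    and der: "\<And>z. z \<in> ball 0 \<sigma> \<Longrightarrow> (p has_derivative (\<lambda>h. \<Sum>n. dhp c n z h)) (at z)"
    and neg: "\<And>z. z \<in> ball 0 \<epsilon> - {0} \<Longrightarrow> frechet_derivative p (at z) (vf z) < 0"
    and below: "\<And>n. n < d \<Longrightarrow> \<forall>i\<le>n. c i (n-i) = 0" and d1: "d \<ge> 1"
    and u: "norm u = 1"
  shows "dhp c d u (f5 u) \<le> 0"
proof -
  define A where "A n = dhp c n u (f5 u)" for n
  define B where "B n = dhp c n u (vf u - f5 u)" for n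
  have smA: "summable (\<lambda>k. A (k+d) * t^k)" if t: "0 \<le> t" "t \<le> \<sigma>" for t
  proof (rule summable_comparison_test'[where g="\<lambda>k. norm (f5 u) / \<sigma>^d * (real (k+d) * beta c (k+d) * \<sigma>^(k+d))"])
    show "summable (\<lambda>k. norm (f5 u) / \<sigma>^d * (real (k+d) * beta c (k+d) * \<sigma>^(k+d)))"
      by (rule summable_mult, rule summable_ignore_initial_segment[OF sm1])
    fix k :: nat
    have "\<bar>A (k+d)\<bar> \<le> real (k+d) * beta c (k+d) * norm u ^ (k+d-1) * norm (f5 u)"
      unfolding A_def by (rule dhp_bound)
    then have a: "\<bar>A (k+d)\<bar> \<le> real (k+d) * beta c (k+d) * norm (f5 u)" using u by simp
    have "norm (A (k+d) * t^k) = \<bar>A (k+d)\<bar> * t^k" using t by (simp add: abs_mult)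
    also have "\<dots> \<le> (real (k+d) * beta c (k+d) * norm (f5 u)) * \<sigma>^k"
      using t a by (intro mult_mono power_mono) auto
    also have "\<dots> = norm (f5 u) / \<sigma>^d * (real (k+d) * beta c (k+d) * \<sigma>^(k+d))"
      using \<sigma> by (simp add: power_add field_simps)
    finally show "norm (A (k+d) * t^k) \<le> norm (f5 u) / \<sigma>^d * (real (k+d) * beta c (k+d) * \<sigma>^(k+d))" .
  qed
  have smB: "summable (\<lambda>k. B (k+d) * t^k)" if t: "0 \<le> t" "t \<le> \<sigma>" for t
  proof (rule summable_comparison_test'[where g="\<lambda>k. norm (vf u - f5 u) / \<sigma>^d * (real (k+d) * beta c (k+d) * \<sigma>^(k+d))"])
    show "summable (\<lambda>k. norm (vf u - f5 u) / \<sigma>^d * (real (k+d) * beta c (k+d) * \<sigma>^(k+d)))"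
      by (rule summable_mult, rule summable_ignore_initial_segment[OF sm1])
    fix k :: nat
    have "\<bar>B (k+d)\<bar> \<le> real (k+d) * beta c (k+d) * norm u ^ (k+d-1) * norm (vf u - f5 u)"
      unfolding B_def by (rule dhp_bound)
    then have a: "\<bar>B (k+d)\<bar> \<le> real (k+d) * beta c (k+d) * norm (vf u - f5 u)" using u by simp
    have "norm (B (k+d) * t^k) = \<bar>B (k+d)\<bar> * t^k" using t by (simp add: abs_mult)
    also have "\<dots> \<le> (real (k+d) * beta c (k+d) * norm (vf u - f5 u)) * \<sigma>^k"
      using t a by (intro mult_mono power_mono) auto
    also have "\<dots> = norm (vf u - f5 u) / \<sigma>^d * (real (k+d) * beta c (k+d) * \<sigma>^(k+d))"
      using \<sigma> by (simp add: power_add field_simps)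
    finally show "norm (B (k+d) * t^k) \<le> norm (vf u - f5 u) / \<sigma>^d * (real (k+d) * beta c (k+d) * \<sigma>^(k+d))" .
  qed
  define H where "H t = (\<Sum>k. A (k+d) * t^k) + t^2 * (\<Sum>k. B (k+d) * t^k)" for t :: real
  have H0: "H 0 = A d" by (simp add: H_def)
  have Hcont: "isCont H 0"
  proof -
    have "isCont (\<lambda>t. \<Sum>k. A (k+d) * t^k) 0"
      by (rule isCont_powser[where K=\<sigma>]) (use smA[of \<sigma>] \<sigma> in auto)
    moreover have "isCont (\<lambda>t. \<Sum>k. B (k+d) * t^k) 0"
      by (rule isCont_powser[where K=\<sigma>]) (use smB[of \<sigma>] \<sigma> in auto)
    ultimately show ?thesis unfolding H_def[abs_def] by (intro continuous_intros)
  qed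
  have Hneg: "H t < 0" if t: "0 < t" "t < min \<epsilon> \<sigma>" for t
  proof -
    have tu: "t *\<^sub>R u \<in> ball 0 \<sigma>" "t *\<^sub>R u \<in> ball 0 \<epsilon> - {0}" using t u by auto
    have "frechet_derivative p (at (t *\<^sub>R u)) = (\<lambda>h. \<Sum>n. dhp c n (t *\<^sub>R u) h)"
      using frechet_derivative_at[OF der[OF tu(1)]] by simp
    then have neg': "(\<Sum>n. dhp c n (t *\<^sub>R u) (vf (t *\<^sub>R u))) < 0" using neg[OF tu(2)] by simp
    define T where "T n = dhp c n (t *\<^sub>R u) (vf (t *\<^sub>R u))" for n
    have Tform: "T n = t^(n-1) * (t^5 * A n + t^7 * B n)" for n
    proof -
      have bl: "linear (dhp c n u)" using dhp_linear bounded_linear.linear by blast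
      have "T n = t^(n-1) * dhp c n u (t^5 *\<^sub>R f5 u + t^7 *\<^sub>R (vf u - f5 u))"
        by (simp add: T_def dhp_scale vf_scale)
      also have "dhp c n u (t^5 *\<^sub>R f5 u + t^7 *\<^sub>R (vf u - f5 u)) = t^5 * A n + t^7 * B n"
        by (simp add: linear_add[OF bl] linear_scale[OF bl] A_def B_def)
      finally show ?thesis .
    qed
    have Tz: "T n = 0" if "n < d" for n
      using hp_below(2)[of n c, OF below[OF that]] by (simp add: T_def)
    have Tsh: "T (k+d) = t^(d+4) * (A (k+d) * t^k + t^2 * (B (k+d) * t^k))" for k
    proof -
      have q1: "k+d-1+5 = d+4+k" "k+d-1+7 = d+4+2+k" using d1 by auto
      have "t^(k+d-1) * t^5 = t^(d+4) * t^k" by (simp only: power_add[symmetric] q1(1))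
      moreover have "t^(k+d-1) * t^7 = t^(d+4) * t^2 * t^k" by (simp only: power_add[symmetric] q1(2))
      ultimately show ?thesis unfolding Tform by (simp add: algebra_simps)
    qed
    have sA: "summable (\<lambda>k. A (k+d) * t^k)" and sB: "summable (\<lambda>k. B (k+d) * t^k)"
      using smA smB t by auto
    have sums1: "(\<lambda>k. T (k+d)) sums (t^(d+4) * H t)"
    proof -
      have "(\<lambda>k. A (k+d) * t^k + t^2 * (B (k+d) * t^k)) sums ((\<Sum>k. A (k+d) * t^k) + t^2 * (\<Sum>k. B (k+d) * t^k))"
        by (intro sums_add summable_sums sums_mult sA sB)
      then show ?thesis unfolding Tsh H_def by (intro sums_mult)
    qed
    have "summable T" using sums1 summable_iff_shift[of T d] sums_summable by blast
    then have "(\<Sum>n. T n) = (\<Sum>k. T (k+d)) + (\<Sum>i<d. T i)" by (rule suminf_split_initial_segment)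
    also have "(\<Sum>i<d. T i) = 0" using Tz by simp
    finally have "(\<Sum>n. T n) = t^(d+4) * H t" using sums1 sums_unique by force
    with neg' have "t^(d+4) * H t < 0" by (simp add: T_def)
    then show ?thesis using t by (simp add: mult_less_0_iff)
  qed
  have "(H \<longlongrightarrow> H 0) (at_right 0)"
    using Hcont by (simp add: isCont_def filterlim_at_split)
  moreover have "eventually (\<lambda>t. H t \<le> 0) (at_right 0)"
    unfolding eventually_at_right_field using \<epsilon> \<sigma> Hneg
    by (intro exI[of _ "min \<epsilon> \<sigma>"]) (auto intro: less_imp_le)
  ultimately have "H 0 \<le> 0" by (rule tendsto_upperbound) simp
  then show ?thesis using H0 by (simp add: A_def)
qed

lemma no_analytic:
  assumes S: "open S" "(0,0) \<in> S" and an: "real_analytic_on p S" and p0: "p (0,0) = 0"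
    and L: "\<forall>z\<in>S - {(0,0)}. p z > 0 \<and> frechet_derivative p (at z) (vf z) < 0"
  shows False
proof -
  from an S(2) obtain r c where r: "r > 0" and hs: "\<forall>z\<in>ball (0,0) r.
      ((\<lambda>(i,j). c i j * (fst z - fst (0::real,0::real))^i * (snd z - snd (0::real,0::real))^j) has_sum p z) UNIV"
    unfolding real_analytic_on_def by blast
  have hs': "((\<lambda>(i,j). c i j * fst z^i * snd z^j) has_sum p z) UNIV" if "z \<in> ball 0 r" for z
    using hs that by (simp add: zero_prod_def)
  define \<rho> where "\<rho> = r/2"
  have \<rho>: "\<rho> > 0" using r by (simp add: \<rho>_def)
  have \<rho>\<rho>: "(\<rho>,\<rho>) \<in> ball 0 r"
  proof -
    have n: "norm (\<rho>,\<rho>) = sqrt (\<rho>^2 + \<rho>^2)" by (simp add: norm_Pair)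
    have a1: "(2*\<rho>)^2 = 4*\<rho>^2" by (simp add: power_mult_distrib)
    have a2: "\<rho>^2 > 0" using \<rho> by simp
    have "sqrt (\<rho>^2 + \<rho>^2) < sqrt ((2*\<rho>)^2)"
      by (rule real_sqrt_less_mono) (use a1 a2 in linarith)
    also have "sqrt ((2*\<rho>)^2) = r" using \<rho> by (simp add: \<rho>_def)
    finally show ?thesis using n by simp
  qed
  have smb: "summable (\<lambda>n. beta c n * \<rho>^n)"
  proof -
    define f where "f q = (case q of (i,j) \<Rightarrow> c i j * \<rho>^i * \<rho>^j)" for q :: "nat \<times> nat"
    have hs\<rho>: "(f has_sum p (\<rho>,\<rho>)) UNIV" using hs'[OF \<rho>\<rho>] unfolding f_def[abs_def] by simp
    have "f summable_on UNIV" using hs\<rho> by (rule has_sum_imp_summable)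
    then have "(\<lambda>q. norm (f q)) summable_on UNIV" using summable_on_iff_abs_summable_on_real by blast
    then have hsabs: "((\<lambda>q. norm (f q)) has_sum infsum (\<lambda>q. norm (f q)) UNIV) UNIV" by (rule has_sum_infsum)
    from group_gen[OF hsabs] have "summable (\<lambda>n. \<Sum>i\<le>n. norm (f (i, n-i)))" by (rule sums_summable)
    moreover have "(\<Sum>i\<le>n. norm (f (i, n-i))) = beta c n * \<rho>^n" for n
      unfolding beta_def sum_distrib_right
    proof (intro sum.cong refl)
      fix i assume "i \<in> {..n}"
      then have "f (i, n-i) = c i (n-i) * \<rho>^n" by (simp add: f_def mult.assoc flip: power_add)
      then show "norm (f (i, n-i)) = \<bar>c i (n-i)\<bar> * \<rho>^n" using \<rho> by (simp add: abs_mult)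
    qed
    ultimately show ?thesis by simp
  qed
  define \<sigma> where "\<sigma> = \<rho>/2"
  have \<sigma>: "\<sigma> > 0" "\<sigma> < \<rho>" "\<sigma> < r" using \<rho> by (auto simp: \<sigma>_def \<rho>_def)
  have sm1: "summable (\<lambda>n. real n * beta c n * \<sigma>^n)"
    by (rule summable_n_times[OF smb beta_nonneg]) (use \<sigma> in auto)
  have \<sigma>r: "ball (0::real\<times>real) \<sigma> \<subseteq> ball 0 r" using \<sigma> \<rho> by (auto simp: \<rho>_def)
  have sums: "(\<lambda>n. hp c n z) sums p z" if "z \<in> ball 0 r" for z
    using group_hp[of c "fst z" "snd z" "p z"] hs'[OF that] by simp
  have der: "(p has_derivative (\<lambda>h. \<Sum>n. dhp c n z h)) (at z)" if "z \<in> ball 0 \<sigma>" for z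
    by (rule analytic_deriv[OF sm1 \<sigma>(1) _ that]) (use sums \<sigma>r in auto)
  obtain e where e: "e > 0" "ball 0 e \<subseteq> S"
    using S open_contains_ball by (metis zero_prod_def)
  define \<epsilon> where "\<epsilon> = min e \<sigma>"
  have \<epsilon>: "\<epsilon> > 0" "ball 0 \<epsilon> \<subseteq> S" "ball 0 \<epsilon> \<subseteq> ball 0 r" using e \<sigma> \<sigma>r by (auto simp: \<epsilon>_def)
  have neg: "frechet_derivative p (at z) (vf z) < 0" if "z \<in> ball 0 \<epsilon> - {0}" for z
    using L that \<epsilon> by (auto simp: zero_prod_def)
  have ex: "\<exists>n. \<exists>i\<le>n. c i (n-i) \<noteq> 0"
  proof (rule ccontr)
    assume "\<not> ?thesis"
    then have c0: "c i j = 0" for i j by (metis add_diff_cancel_left' le_add1)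
    define z where "z = (\<epsilon>/2, 0::real)"
    have z: "z \<in> ball 0 \<epsilon>" "z \<noteq> 0" using \<epsilon>
      by (auto simp: z_def zero_prod_def dist_norm norm_Pair)
    have "z \<in> ball 0 r" using z \<epsilon> by blast
    then have "((\<lambda>(i,j). c i j * fst z^i * snd z^j) has_sum p z) UNIV" by (rule hs')
    moreover have "(\<lambda>(i,j). c i j * fst z^i * snd z^j) = (\<lambda>_::nat\<times>nat. 0::real)"
      by (rule ext) (simp add: c0 split: prod.split)
    ultimately have "((\<lambda>_::nat\<times>nat. 0::real) has_sum p z) UNIV" by simp
    then have "p z = 0" by (metis has_sum_0 has_sum_unique)
    moreover have "p z > 0" using L z \<epsilon> by (auto simp: zero_prod_def)
    ultimately show False by simp
  qed
  define d where "d = (LEAST n. \<exists>i\<le>n. c i (n-i) \<noteq> 0)"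
  have dex: "\<exists>i\<le>d. c i (d-i) \<noteq> 0" unfolding d_def by (rule LeastI_ex[OF ex])
  have below: "\<forall>i\<le>n. c i (n-i) = 0" if "n < d" for n
    using not_less_Least[of n "\<lambda>n. \<exists>i\<le>n. c i (n-i) \<noteq> 0"] that by (auto simp: d_def)
  have c00: "c 0 0 = 0"
  proof -
    have "hp c n 0 = (if n = 0 then c 0 0 else 0)" for n
    proof -
      have "hp c n 0 = hp c n ((0::real) *\<^sub>R (1,1))" by (simp add: zero_prod_def)
      also have "\<dots> = 0^n * hp c n (1,1)" by (rule hp_scale)
      finally show ?thesis by (simp add: hp_def)
    qed
    then have "(\<lambda>n. hp c n 0) sums c 0 0" using sums_single[of 0 "\<lambda>_. c 0 0"] by simp
    moreover have "(\<lambda>n. hp c n 0) sums p 0" using sums r by simp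
    ultimately show ?thesis using p0 sums_unique2 by (metis zero_prod_def)
  qed
  have d1: "d \<ge> 1" using dex c00 by (cases d) auto
  have Q: "dhp c d u (f5 u) \<le> 0" if "norm u = 1" for u
    by (rule key_sign[OF sm1 \<sigma>(1) \<epsilon>(1) der neg below d1 that]) auto
  from polar_part[OF Q] obtain K where
    K: "\<And>u. norm u = 1 \<Longrightarrow> hp c d u = K * exp (real d / 2 * ln (2*(fst u^4 + snd u^4)))"
    and Kodd: "odd d \<Longrightarrow> K = 0" by blast
  define G where "G = (\<Sum>i\<le>d. monom (c i (d-i)) i)"
  have pG: "poly G x = hp c d (x,1)" for x
    by (simp add: G_def hp_def poly_sum poly_monom mult.commute)
  have scl: "hp c d (x,1) = norm (x,1::real)^d * (K * exp (real d / 2 * ln (2*((x/norm (x,1::real))^4 + (1/norm(x,1::real))^4))))" for x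
  proof -
    define r where "r = norm (x, 1::real)"
    have rpos: "r > 0" by (simp add: r_def zero_prod_def)
    define u where "u = (1/r) *\<^sub>R (x, 1::real)"
    have "norm u = \<bar>1/r\<bar> * r" by (simp only: u_def norm_scaleR r_def real_norm_def)
    then have nu: "norm u = 1" using rpos by simp
    have fu: "fst u = x/r" "snd u = 1/r" by (simp_all add: u_def)
    have "hp c d (x,1) = hp c d (r *\<^sub>R u)" using rpos by (simp add: u_def)
    also have "\<dots> = r^d * hp c d u" by (rule hp_scale)
    also have "\<dots> = r^d * (K * exp (real d / 2 * ln (2*(fst u^4 + snd u^4))))" using K[OF nu] by simp
    also have "\<dots> = r^d * (K * exp (real d / 2 * ln (2*((x/r)^4 + (1/r)^4))))" by (simp only: fu)
    finally show ?thesis by (simp only: r_def)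
  qed
  have G0: "G = 0"
  proof (cases "odd d")
    case True
    then have "poly G x = 0" for x using pG scl Kodd by simp
    then show ?thesis using poly_eq_poly_eq_iff[of G 0] by auto
  next
    case False
    then obtain m where m: "d = 2*m" by (metis evenE)
    then have m1: "m \<ge> 1" using d1 by simp
    have eq: "poly G x * (x^2+1)^m = (K * 2^m) * (x^4+1)^m" for x
    proof -
      define r where "r = norm (x, 1::real)"
      have rpos: "r > 0" by (simp add: r_def zero_prod_def)
      have r2: "r^2 = x^2+1" by (simp add: r_def norm_Pair)
      define B where "B = 2*((x/r)^4 + (1/r)^4)"
      have Bpos: "B > 0"
      proof -
        have "(x/r)^4 = ((x/r)^2)^2" by (simp flip: power_mult)
        then have "(x/r)^4 \<ge> 0" by simp
        moreover have "(1/r)^4 > 0" using rpos by simp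
        ultimately have "(x/r)^4 + (1/r)^4 > 0" by (rule add_nonneg_pos)
        then show ?thesis unfolding B_def by simp
      qed
      have eB: "exp (real d / 2 * ln B) = B^m"
      proof -
        have "real d / 2 = real m" by (simp add: m)
        then have "exp (real d / 2 * ln B) = exp (ln B) ^ m" by (simp add: exp_of_nat_mult)
        then show ?thesis using Bpos by simp
      qed
      have pg: "poly G x = r^d * (K * B^m)"
        using scl[of x] pG[of x] eB by (simp only: r_def B_def)
      have r4: "r^4 = (x^2+1)^2"
      proof -
        have "r^4 = (r^2)^2" by (simp flip: power_mult)
        then show ?thesis by (simp only: r2)
      qed
      have B4: "B * r^4 = 2*(x^4+1)"
        using rpos by (simp add: B_def power_divide field_simps)
      have "poly G x * (x^2+1)^m = (r^2)^m * (K * B^m) * (x^2+1)^m"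
        by (simp only: pg m power_mult)
      also have "\<dots> = K * ((B * (x^2+1)^2))^m"
        by (simp only: r2 power_mult_distrib power_mult[symmetric] mult_ac)
           (simp add: power_mult[symmetric] power_add[symmetric] mult_ac mult_2_right mult_2)
      also have "\<dots> = K * (2*(x^4+1))^m" using B4 r4 by simp
      also have "\<dots> = (K * 2^m) * (x^4+1)^m" by (simp only: power_mult_distrib mult.assoc)
      finally show ?thesis .
    qed
    have "K * 2^m = 0" by (rule poly_contra[OF m1 eq])
    then have "K = 0" by simp
    then have "poly G x = 0" for x using pG scl by simp
    then show ?thesis using poly_eq_poly_eq_iff[of G 0] by auto
  qed
  from dex obtain i where i: "i \<le> d" "c i (d-i) \<noteq> 0" by blast
  have "coeff G i = c i (d-i)"
    unfolding G_def coeff_sum coeff_monom using i(1) by (simp add: sum.delta')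
  then show False using G0 i by simp
qed

definition Wf :: "real \<times> real \<Rightarrow> real" where
  "Wf z = 2 * (fst z ^ 4 + snd z ^ 4) / (fst z ^ 2 + snd z ^ 2)"

lemma norm_sq: "norm z ^ 2 = fst z ^ 2 + snd z ^ 2" for z :: "real \<times> real"
  by (simp add: norm_prod_def)

lemma sq_sum_le': "(p + q)^2 \<le> 2 * (p^2 + q^2)" for p q :: real
  using zero_le_power2[of "p - q"] by (simp add: power2_diff power2_sum algebra_simps)

lemma W_bounds: "norm z ^ 2 \<le> Wf z" "Wf z \<le> 2 * norm z ^ 2"
proof -
  define x y where "x = fst z" and "y = snd z"
  define R where "R = x^2 + y^2"
  have R: "norm z ^ 2 = R" by (simp add: norm_sq R_def x_def y_def)
  have W: "Wf z = 2 * (x^4 + y^4) / R" by (simp add: Wf_def R_def x_def y_def)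
  have x4: "x^4 = (x^2)^2" "y^4 = (y^2)^2" by (simp_all flip: power_mult)
  have l: "R^2 \<le> 2 * (x^4 + y^4)" unfolding R_def x4 by (rule sq_sum_le')
  have u: "x^4 + y^4 \<le> R^2" unfolding R_def x4 by (simp add: power2_sum)
  show "norm z ^ 2 \<le> Wf z"
  proof (cases "R = 0")
    case True then show ?thesis using R W by simp
  next
    case False
    then have "R > 0" by (simp add: R_def add_pos_nonneg sum_power2_gt_zero_iff)
    then show ?thesis using R W l by (simp add: le_divide_eq power2_eq_square)
  qed
  show "Wf z \<le> 2 * norm z ^ 2"
  proof (cases "R = 0")
    case True then show ?thesis using R W by simp
  next
    case False
    then have "R > 0" by (simp add: R_def add_pos_nonneg sum_power2_gt_zero_iff)
    then show ?thesis using R W u by (simp add: divide_le_eq power2_eq_square)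
  qed
qed

lemma W_nonneg: "Wf z \<ge> 0"
  using W_bounds(1)[of z] by (meson order_trans zero_le_power2)

lemma W_deriv0: "(Wf has_derivative (\<lambda>h. 0)) (at 0)"
proof -
  have "((\<lambda>y. norm (Wf y - Wf 0 - 0) / norm (y - 0)) \<longlongrightarrow> 0) (at (0::real\<times>real))"
  proof (rule Lim_null_comparison)
    show "\<forall>\<^sub>F y in at 0. norm (norm (Wf y - Wf 0 - 0) / norm (y - 0)) \<le> 2 * norm y"
    proof (rule always_eventually, rule allI)
      fix y :: "real \<times> real"
      have W0: "Wf 0 = 0" by (simp add: Wf_def)
      show "norm (norm (Wf y - Wf 0 - 0) / norm (y - 0)) \<le> 2 * norm y"
      proof (cases "y = 0")
        case True then show ?thesis by simp
      next
        case False
        then have "norm y > 0" by simp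
        then show ?thesis using W_bounds[of y] W_nonneg[of y] W0
          by (simp add: divide_le_eq power2_eq_square mult.assoc)
      qed
    qed
    show "((\<lambda>y. 2 * norm y) \<longlongrightarrow> 0) (at (0::real\<times>real))"
      by (rule tendsto_eq_intros refl | simp)+
  qed
  then show ?thesis
    unfolding has_derivative_iff_norm by (simp add: bounded_linear_zero)
qed

definition fW :: "real \<times> real \<Rightarrow> real" where "fW z = 2 * (fst z ^ 4 + snd z ^ 4)"
definition gW :: "real \<times> real \<Rightarrow> real" where "gW z = fst z ^ 2 + snd z ^ 2"
definition fW' :: "real \<times> real \<Rightarrow> real \<times> real \<Rightarrow> real" where
  "fW' z h = 8 * fst z ^ 3 * fst h + 8 * snd z ^ 3 * snd h"
definition gW' :: "real \<times> real \<Rightarrow> real \<times> real \<Rightarrow> real" where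
  "gW' z h = 2 * fst z * fst h + 2 * snd z * snd h"
definition DW :: "real \<times> real \<Rightarrow> real \<times> real \<Rightarrow> real" where
  "DW z h = (fW' z h * gW z - fW z * gW' z h) / (gW z * gW z)"

lemma fW_deriv: "(fW has_derivative fW' z) (at z)"
  unfolding fW_def[abs_def] fW'_def[abs_def]
  by (auto intro!: derivative_eq_intros simp: algebra_simps)

lemma gW_deriv: "(gW has_derivative gW' z) (at z)"
  unfolding gW_def[abs_def] gW'_def[abs_def]
  by (auto intro!: derivative_eq_intros simp: algebra_simps)

lemma W_deriv_nz: assumes "z \<noteq> 0" shows "(Wf has_derivative DW z) (at z)"
proof -
  have R: "gW z \<noteq> 0"
    using assms by (simp add: gW_def sum_power2_eq_zero_iff prod_eq_iff)
  have "Wf = (\<lambda>z. fW z / gW z)" by (rule ext) (simp add: Wf_def fW_def gW_def)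
  then show ?thesis unfolding DW_def[abs_def]
    using has_derivative_divide'[OF fW_deriv gW_deriv R] by simp
qed

lemma DW_vf: assumes "z \<noteq> 0" shows "DW z (vf z) \<le> -2 * norm z ^ 8"
proof -
  define x y where "x = fst z" and "y = snd z"
  define R where "R = x^2 + y^2"
  define V where "V = x^4 + y^4"
  define h1 where "h1 = 2*x*(x^4 + 2*x^2*y^2 - y^4)"
  define h2 where "h2 = 2*y*(- (x^4) + 2*x^2*y^2 + y^4)"
  have Rpos: "R > 0" using assms
    by (simp add: R_def x_def y_def add_pos_nonneg sum_power2_gt_zero_iff prod_eq_iff)
  have nz: "norm z ^ 2 = R" by (simp add: norm_sq R_def x_def y_def)
  have gz: "gW z = R" by (simp add: gW_def R_def x_def y_def)
  have vfz: "vf z = (- h2 - R * h1, h1 - R * h2)"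
    by (simp add: vf_def Let_def h1_def h2_def R_def x_def y_def algebra_simps)
  have id1: "fW' z (vf z) * gW z - fW z * gW' z (vf z) = -2 * (h1^2 + h2^2) * R"
    unfolding vfz gz by (simp add: fW'_def fW_def gW'_def x_def[symmetric] y_def[symmetric]
       h1_def h2_def R_def) algebra
  have id2: "x * h1 + y * h2 = 2 * R * V"
    unfolding h1_def h2_def R_def V_def by algebra
  have id3: "(x * h1 + y * h2)^2 + (x * h2 - y * h1)^2 = R * (h1^2 + h2^2)"
    unfolding R_def by algebra
  have e: "R * (4 * R * V^2) = 4 * R^2 * V^2" by (simp add: power2_eq_square)
  have "4 * R^2 * V^2 + (x * h2 - y * h1)^2 = R * (h1^2 + h2^2)"
    using id2 id3 by (simp add: power_mult_distrib)
  then have "R * (4 * R * V^2) \<le> R * (h1^2 + h2^2)"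
    using e zero_le_power2[of "x * h2 - y * h1"] by linarith
  then have hh: "4 * R * V^2 \<le> h1^2 + h2^2" using Rpos by simp
  have DWe: "DW z (vf z) = -2 * (h1^2 + h2^2) / R"
    unfolding DW_def id1 unfolding gz using Rpos by simp
  have "DW z (vf z) \<le> -2 * (4 * R * V^2) / R"
    unfolding DWe using hh Rpos by (intro divide_right_mono) auto
  also have "\<dots> = -8 * V^2" using Rpos by simp
  also have "\<dots> \<le> -2 * R^4"
  proof -
    have x4: "x^4 = (x^2)^2" "y^4 = (y^2)^2" by (simp_all flip: power_mult)
    have "R^2 \<le> 2 * V" unfolding R_def V_def x4 by (rule sq_sum_le')
    then have "(R^2)^2 \<le> (2*V)^2" using Rpos by (intro power_mono) auto
    then show ?thesis by (simp add: power_mult_distrib flip: power_mult)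
  qed
  also have "R^4 = norm z ^ 8"
  proof -
    have "norm z ^ 8 = (norm z ^ 2)^4" by (simp flip: power_mult)
    then show ?thesis using nz by simp
  qed
  finally show ?thesis .
qed

lemma W_deriv: "\<exists>D. (Wf has_derivative D) (at z) \<and> D (vf z) \<le> -2 * norm z ^ 8"
proof (cases "z = 0")
  case True then show ?thesis using W_deriv0 by auto
next
  case False then show ?thesis using W_deriv_nz DW_vf by blast
qed

lemma chain_W:
  assumes "(\<phi> has_vector_derivative v) (at t within S)" "(Wf has_derivative D) (at (\<phi> t))"
  shows "((\<lambda>t. Wf (\<phi> t)) has_real_derivative D v) (at t within S)"
proof -
  have lin: "linear D" using assms(2) has_derivative_bounded_linear bounded_linear.linear by blast
  have "((\<lambda>x. Wf (\<phi> x)) has_derivative (\<lambda>x. D (x *\<^sub>R v))) (at t within S)"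
    using has_derivative_compose[OF assms(1)[unfolded has_vector_derivative_def] assms(2)] .
  moreover have "(\<lambda>x. D (x *\<^sub>R v)) = (\<lambda>x. D v * x)"
    by (rule ext) (simp add: linear_scale[OF lin])
  ultimately show ?thesis by (simp add: has_field_derivative_def)
qed

lemma nonincr:
  fixes g g' :: "real \<Rightarrow> real"
  assumes der: "\<And>t. t \<ge> 0 \<Longrightarrow> (g has_real_derivative g' t) (at t within {0..})"
    and neg: "\<And>t. a < t \<Longrightarrow> t < b \<Longrightarrow> g' t \<le> 0" and ab: "0 \<le> a" "a \<le> b"
  shows "g b \<le> g a"
proof (rule DERIV_nonpos_imp_decreasing_open[OF ab(2)])
  fix x assume x: "a < x" "x < b"
  then have "x \<in> interior {0..}" using ab by (simp add: interior_real_atLeast)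
  then have "(g has_real_derivative g' x) (at x)"
    using der[of x] x ab at_within_interior by fastforce
  then show "\<exists>y. (g has_real_derivative y) (at x) \<and> y \<le> 0" using neg x by blast
next
  show "continuous_on {a..b} g"
  proof (rule continuous_on_eq_continuous_within[THEN iffD2], rule ballI)
    fix x assume x: "x \<in> {a..b}"
    then have "continuous (at x within {0..}) g" using der[of x] ab DERIV_continuous by auto
    then show "continuous (at x within {a..b}) g"
      by (rule continuous_within_subset) (use ab in auto)
  qed
qed

lemma decay:
  fixes g g' :: "real \<Rightarrow> real"
  assumes der: "\<And>t. t \<ge> 0 \<Longrightarrow> (g has_real_derivative g' t) (at t within {0..})"
    and neg: "\<And>t. a < t \<Longrightarrow> t < b \<Longrightarrow> g' t \<le> - c" and ab: "0 \<le> a" "a \<le> b"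
  shows "g b \<le> g a - c * (b - a)"
proof -
  have "(\<lambda>t. g t + c * t) b \<le> (\<lambda>t. g t + c * t) a"
  proof (rule nonincr[where g="\<lambda>t. g t + c * t" and g'="\<lambda>t. g' t + c"])
    show "((\<lambda>t. g t + c * t) has_real_derivative g' t + c) (at t within {0..})" if "t \<ge> 0" for t
      using der[OF that] by (auto intro!: derivative_eq_intros)
  next
    fix t assume "a < t" "t < b"
    then show "g' t + c \<le> 0" using neg[of t] by simp
  qed (use ab in auto)
  then show ?thesis by (simp add: algebra_simps)
qed

lemma stay_below:
  fixes g g' :: "real \<Rightarrow> real"
  assumes der: "\<And>t. t \<ge> 0 \<Longrightarrow> (g has_real_derivative g' t) (at t within {0..})"
    and neg: "\<And>t. t \<ge> 0 \<Longrightarrow> g t < B \<Longrightarrow> g' t \<le> 0" and g0: "g 0 < B" and T: "T \<ge> 0"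
  shows "g T \<le> g 0"
proof (rule ccontr)
  assume "\<not> g T \<le> g 0"
  then have gT: "g T > g 0" by simp
  define c where "c = min (g T) ((g 0 + B)/2)"
  have hB: "(g 0 + B)/2 < B" "g 0 < (g 0 + B)/2" using g0 by auto
  have c1: "c \<le> (g 0 + B)/2" "c \<le> g T" unfolding c_def by (rule min.cobounded2, rule min.cobounded1)
  have c2: "g 0 < c" unfolding c_def using gT hB by simp
  have c: "g 0 < c" "c < B" "c \<le> g T" using c1 c2 hB by linarith+
  have cont: "continuous_on {0..T} g"
  proof (rule continuous_on_eq_continuous_within[THEN iffD2], rule ballI)
    fix x assume x: "x \<in> {0..T}"
    then have "continuous (at x within {0..}) g" using der[of x] DERIV_continuous by auto
    then show "continuous (at x within {0..T}) g"
      by (rule continuous_within_subset) auto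
  qed
  define A where "A = {0..T} \<inter> g -` {c..}"
  have Acl: "closed A" unfolding A_def by (rule continuous_closed_preimage[OF cont]) auto
  have TA: "T \<in> A" using T c by (simp add: A_def)
  have bdd: "bdd_below A" unfolding A_def by (rule bdd_belowI[of _ 0]) auto
  define t3 where "t3 = Inf A"
  have t3A: "t3 \<in> A" unfolding t3_def using closed_contains_Inf[OF _ bdd Acl] TA by blast
  have t3: "0 \<le> t3" "t3 \<le> T" "g t3 \<ge> c" using t3A by (auto simp: A_def)
  have below: "g t < c" if "0 \<le> t" "t < t3" for t
  proof (rule ccontr)
    assume "\<not> g t < c"
    then have "t \<in> A" using that t3 by (auto simp: A_def)
    then have "t3 \<le> t" unfolding t3_def using bdd by (rule cInf_lower)
    then show False using that by simp
  qed
  have "g t3 \<le> g 0"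
  proof (rule nonincr[OF der _ order_refl t3(1)])
    fix t assume "0 < t" "t < t3"
    then show "g' t \<le> 0" using below[of t] c neg[of t] by auto
  qed
  then show False using t3 c by simp
qed

definition DWs :: "real \<times> real \<Rightarrow> real \<times> real \<Rightarrow> real" where
  "DWs z = (SOME D. (Wf has_derivative D) (at z) \<and> D (vf z) \<le> -2 * norm z ^ 8)"

lemma DWs: "(Wf has_derivative DWs z) (at z)" "DWs z (vf z) \<le> -2 * norm z ^ 8"
  using someI_ex[OF W_deriv[of z]] unfolding DWs_def by blast+

lemma sol_deriv:
  assumes "is_solution \<phi>" "t \<ge> 0"
  shows "((\<lambda>t. Wf (\<phi> t)) has_real_derivative DWs (\<phi> t) (vf (\<phi> t))) (at t within {0..})"
  using assms unfolding is_solution_def by (intro chain_W DWs(1)) auto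

lemma sol_mono:
  assumes "is_solution \<phi>" "0 \<le> a" "a \<le> b"
  shows "Wf (\<phi> b) \<le> Wf (\<phi> a)"
proof (rule nonincr[where g="\<lambda>t. Wf (\<phi> t)"])
  show "((\<lambda>t. Wf (\<phi> t)) has_real_derivative DWs (\<phi> t) (vf (\<phi> t))) (at t within {0..})" if "t \<ge> 0" for t
    by (rule sol_deriv[OF assms(1) that])
  show "DWs (\<phi> t) (vf (\<phi> t)) \<le> 0" for t
  proof -
    have "0 \<le> norm (\<phi> t) ^ 8" by simp
    then show ?thesis using DWs(2)[of "\<phi> t"] by linarith
  qed
qed (use assms in auto)

lemma stable:
  "\<forall>\<epsilon>>0. \<exists>\<delta>>0. \<forall>\<phi>. is_solution \<phi> \<and> norm (\<phi> 0) < \<delta> \<longrightarrow> (\<forall>t\<ge>0. norm (\<phi> t) < \<epsilon>)"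
proof (intro allI impI)
  fix \<epsilon> :: real assume e: "\<epsilon> > 0"
  show "\<exists>\<delta>>0. \<forall>\<phi>. is_solution \<phi> \<and> norm (\<phi> 0) < \<delta> \<longrightarrow> (\<forall>t\<ge>0. norm (\<phi> t) < \<epsilon>)"
  proof (intro exI[of _ "\<epsilon>/2"] conjI allI impI)
    show "\<epsilon>/2 > 0" using e by simp
    fix \<phi> and t :: real assume h: "is_solution \<phi> \<and> norm (\<phi> 0) < \<epsilon>/2" and t: "0 \<le> t"
    have "norm (\<phi> t) ^ 2 \<le> Wf (\<phi> t)" by (rule W_bounds)
    also have "\<dots> \<le> Wf (\<phi> 0)" using sol_mono[of \<phi> 0 t] h t by auto
    also have "\<dots> \<le> 2 * norm (\<phi> 0) ^ 2" by (rule W_bounds)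
    also have "\<dots> \<le> 2 * (\<epsilon>/2)^2"
      using h by (intro mult_left_mono power_mono) auto
    also have "\<dots> < \<epsilon>^2" using e by (simp add: power_divide)
    finally show "norm (\<phi> t) < \<epsilon>" using e by (simp add: power_less_imp_less_base)
  qed
qed

lemma converge:
  assumes sol: "is_solution \<phi>"
  shows "(\<phi> \<longlongrightarrow> 0) at_top"
proof (rule tendstoI)
  fix e :: real assume e: "e > 0"
  define g where "g t = Wf (\<phi> t)" for t
  have ex: "\<exists>t0\<ge>0. g t0 < e^2"
  proof (rule ccontr)
    assume "\<not> ?thesis"
    then have big: "g t \<ge> e^2" if "t \<ge> 0" for t using that by force
    define c where "c = 2 * (e^2/2)^4"
    have cpos: "c > 0" using e by (simp add: c_def)
    have dec: "g T \<le> g 0 - c * (T - 0)" if "T \<ge> 0" for T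
    proof (rule decay[where g'="\<lambda>t. DWs (\<phi> t) (vf (\<phi> t))"])
      show "(g has_real_derivative DWs (\<phi> t) (vf (\<phi> t))) (at t within {0..})" if "t \<ge> 0" for t
        unfolding g_def by (rule sol_deriv[OF sol that])
      fix t assume t: "0 < t" "t < T"
      have "e^2 / 2 \<le> norm (\<phi> t) ^ 2"
        using big[of t] W_bounds(2)[of "\<phi> t"] t by (simp add: g_def)
      then have "(e^2/2)^4 \<le> (norm (\<phi> t) ^ 2)^4" using e by (intro power_mono) auto
      then have "(e^2/2)^4 \<le> norm (\<phi> t) ^ 8" by (simp flip: power_mult)
      then show "DWs (\<phi> t) (vf (\<phi> t)) \<le> - c" using DWs(2)[of "\<phi> t"] by (simp add: c_def)
    qed (use that in auto)
    define T where "T = g 0 / c + 1"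
    have T: "T \<ge> 0" using cpos W_nonneg[of "\<phi> 0"] by (simp add: T_def g_def)
    have "g T \<le> g 0 - c * T" using dec[OF T] by simp
    also have "\<dots> = - c" using cpos by (simp add: T_def algebra_simps)
    finally have "g T < 0" using cpos by simp
    then show False using W_nonneg[of "\<phi> T"] by (simp add: g_def)
  qed
  then obtain t0 where t0: "t0 \<ge> 0" "g t0 < e^2" by blast
  show "\<forall>\<^sub>F t in at_top. dist (\<phi> t) 0 < e"
    unfolding eventually_at_top_linorder
  proof (intro exI[of _ t0] allI impI)
    fix t assume t: "t \<ge> t0"
    have "norm (\<phi> t) ^ 2 \<le> g t" unfolding g_def by (rule W_bounds)
    also have "\<dots> \<le> g t0" unfolding g_def by (rule sol_mono[OF sol t0(1) t])
    also have "\<dots> < e^2" by (rule t0(2))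
    finally show "dist (\<phi> t) 0 < e" using e by (simp add: power_less_imp_less_base)
  qed
qed

definition Pv :: "real \<times> real \<Rightarrow> real" where
  "Pv z = (let x = fst z; y = snd z in 2*x^4*y - 4*x^2*y^3 - 2*y^5 - 2*x^7 - 6*x^5*y^2 - 2*x^3*y^4 + 2*x*y^6)"
definition Qv :: "real \<times> real \<Rightarrow> real" where
  "Qv z = (let x = fst z; y = snd z in 2*x^5 + 4*x^3*y^2 - 2*x*y^4 + 2*x^6*y - 2*x^4*y^3 - 6*x^2*y^5 - 2*y^7)"
definition Pvx :: "real \<times> real \<Rightarrow> real" where
  "Pvx z = (let x = fst z; y = snd z in 8*x^3*y - 8*x*y^3 - 14*x^6 - 30*x^4*y^2 - 6*x^2*y^4 + 2*y^6)"
definition Pvy :: "real \<times> real \<Rightarrow> real" where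
  "Pvy z = (let x = fst z; y = snd z in 2*x^4 - 12*x^2*y^2 - 10*y^4 - 12*x^5*y - 8*x^3*y^3 + 12*x*y^5)"
definition Qvx :: "real \<times> real \<Rightarrow> real" where
  "Qvx z = (let x = fst z; y = snd z in 10*x^4 + 12*x^2*y^2 - 2*y^4 + 12*x^5*y - 8*x^3*y^3 - 12*x*y^5)"
definition Qvy :: "real \<times> real \<Rightarrow> real" where
  "Qvy z = (let x = fst z; y = snd z in 8*x^3*y - 8*x*y^3 + 2*x^6 - 6*x^4*y^2 - 30*x^2*y^4 - 14*y^6)"

lemma vf_PQ: "vf z = (Pv z, Qv z)"
  unfolding vf_def Pv_def Qv_def Let_def by (simp add: prod_eq_iff, intro conjI; algebra)

lemma Pv_deriv: "(Pv has_derivative (\<lambda>h. Pvx z * fst h + Pvy z * snd h)) (at z)"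
  unfolding Pv_def[abs_def] Pvx_def Pvy_def Let_def
  by (auto intro!: derivative_eq_intros simp: fun_eq_iff; algebra)

lemma Qv_deriv: "(Qv has_derivative (\<lambda>h. Qvx z * fst h + Qvy z * snd h)) (at z)"
  unfolding Qv_def[abs_def] Qvx_def Qvy_def Let_def
  by (auto intro!: derivative_eq_intros simp: fun_eq_iff; algebra)

definition Dvf :: "real \<times> real \<Rightarrow> real \<times> real \<Rightarrow> real \<times> real" where
  "Dvf z h = (Pvx z * fst h + Pvy z * snd h, Qvx z * fst h + Qvy z * snd h)"

lemma vf_deriv: "(vf has_derivative Dvf z) (at z)"
proof -
  have "vf = (\<lambda>z. (Pv z, Qv z))" using vf_PQ by auto
  then show ?thesis unfolding Dvf_def[abs_def]
    using has_derivative_Pair[OF Pv_deriv Qv_deriv] by simp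
qed

definition Sv :: "real \<times> real \<Rightarrow> real" where
  "Sv z = \<bar>Pvx z\<bar> + \<bar>Pvy z\<bar> + \<bar>Qvx z\<bar> + \<bar>Qvy z\<bar>"

lemma abs_lin_bound: "\<bar>a * fst h + b * snd h\<bar> \<le> (\<bar>a\<bar> + \<bar>b\<bar>) * norm h" for h :: "real \<times> real"
proof -
  have "\<bar>a * fst h + b * snd h\<bar> \<le> \<bar>a\<bar> * \<bar>fst h\<bar> + \<bar>b\<bar> * \<bar>snd h\<bar>"
    by (metis abs_mult abs_triangle_ineq)
  also have "\<dots> \<le> \<bar>a\<bar> * norm h + \<bar>b\<bar> * norm h"
    by (intro add_mono mult_left_mono) (simp_all add: abs_fst_le abs_snd_le)
  finally show ?thesis by (simp add: algebra_simps)
qed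

lemma Dvf_bound: "norm (Dvf z h) \<le> Sv z * norm h"
proof -
  have "norm (Dvf z h) \<le> \<bar>Pvx z * fst h + Pvy z * snd h\<bar> + \<bar>Qvx z * fst h + Qvy z * snd h\<bar>"
    unfolding Dvf_def using norm_Pair_le by (metis real_norm_def)
  also have "\<dots> \<le> (\<bar>Pvx z\<bar> + \<bar>Pvy z\<bar>) * norm h + (\<bar>Qvx z\<bar> + \<bar>Qvy z\<bar>) * norm h"
    by (intro add_mono abs_lin_bound)
  finally show ?thesis by (simp add: Sv_def algebra_simps)
qed

lemma Sv_cont: "continuous_on A Sv"
  unfolding Sv_def Pvx_def Pvy_def Qvx_def Qvy_def Let_def by (intro continuous_intros)

lemma vf_cont: "continuous_on A vf"
  unfolding vf_def Let_def by (intro continuous_intros)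

lemma vf_lip_box:
  assumes R: "R \<ge> 0"
  shows "\<exists>C\<ge>0. \<forall>z\<in>{-R..R}\<times>{-R..R}. \<forall>w\<in>{-R..R}\<times>{-R..R}. dist (vf z) (vf w) \<le> C * dist z w"
proof -
  define K where "K = {-R..R}\<times>{-R..R}"
  have K: "compact K" "convex K" "K \<noteq> {}" using R by (auto simp: K_def compact_Times convex_Times)
  obtain zm where zm: "zm \<in> K" "\<And>y. y \<in> K \<Longrightarrow> Sv y \<le> Sv zm"
    using continuous_attains_sup[OF K(1) K(3) Sv_cont] by blast
  define C where "C = Sv zm"
  have C: "C \<ge> 0" by (simp add: C_def Sv_def)
  have "C-lipschitz_on K vf"
  proof (rule bounded_derivative_imp_lipschitz[OF _ K(2) _ C])
    show "(vf has_derivative Dvf x) (at x within K)" if "x \<in> K" for x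
      by (rule has_derivative_at_withinI[OF vf_deriv])
    show "onorm (Dvf x) \<le> C" if "x \<in> K" for x
    proof (rule onorm_le)
      fix h
      have "norm (Dvf x h) \<le> Sv x * norm h" by (rule Dvf_bound)
      also have "\<dots> \<le> C * norm h" using zm(2)[OF that] by (simp add: C_def mult_right_mono)
      finally show "norm (Dvf x h) \<le> C * norm h" .
    qed
  qed
  then show ?thesis using C unfolding K_def by (meson lipschitz_onD)
qed

lemma vf_bnd_box:
  assumes R: "R \<ge> 0"
  shows "\<exists>B. \<forall>z\<in>{-R..R}\<times>{-R..R}. norm (vf z) \<le> B"
proof -
  define K where "K = {-R..R}\<times>{-R..R}"
  have K: "compact K" "K \<noteq> {}" using R by (auto simp: K_def compact_Times)
  have "continuous_on K (\<lambda>z. norm (vf z))" by (intro continuous_intros vf_cont)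
  from continuous_attains_sup[OF K this] show ?thesis unfolding K_def by blast
qed

definition clampRv :: "real \<Rightarrow> real \<Rightarrow> real" where "clampRv R a = max (-R) (min R a)"
definition clampv :: "real \<Rightarrow> real \<times> real \<Rightarrow> real \<times> real" where
  "clampv R z = (clampRv R (fst z), clampRv R (snd z))"

lemma clampRv_lip: "\<bar>clampRv R a - clampRv R b\<bar> \<le> \<bar>a - b\<bar>"
  unfolding clampRv_def by (auto simp: max_def min_def)

lemma clampv_lip: "dist (clampv R z) (clampv R w) \<le> dist z w"
proof -
  have "dist (clampv R z) (clampv R w) = sqrt ((clampRv R (fst z) - clampRv R (fst w))^2 + (clampRv R (snd z) - clampRv R (snd w))^2)"
    by (simp add: clampv_def dist_Pair_Pair dist_real_def)
  also have "\<dots> \<le> sqrt ((fst z - fst w)^2 + (snd z - snd w)^2)"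
    by (intro real_sqrt_le_mono add_mono; subst abs_le_square_iff[symmetric]; rule clampRv_lip)
  also have "\<dots> = dist z w"
    by (metis dist_Pair_Pair dist_real_def prod.collapse real_sqrt_abs2 power2_abs)
  finally show ?thesis .
qed

lemma clampv_box: "R \<ge> 0 \<Longrightarrow> clampv R z \<in> {-R..R}\<times>{-R..R}"
  by (auto simp: clampv_def clampRv_def)

lemma clampv_id: "\<bar>fst z\<bar> \<le> R \<Longrightarrow> \<bar>snd z\<bar> \<le> R \<Longrightarrow> clampv R z = z"
  by (auto simp: clampv_def clampRv_def prod_eq_iff)

lemma F_props:
  assumes R: "R \<ge> 0"
  shows "\<exists>L>0. \<forall>z w. dist (vf (clampv R z)) (vf (clampv R w)) \<le> L * dist z w"
    and "\<exists>B. \<forall>z. norm (vf (clampv R z)) \<le> B"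
proof -
  obtain C where C: "C \<ge> 0" "\<forall>z\<in>{-R..R}\<times>{-R..R}. \<forall>w\<in>{-R..R}\<times>{-R..R}. dist (vf z) (vf w) \<le> C * dist z w"
    using vf_lip_box[OF R] by blast
  show "\<exists>L>0. \<forall>z w. dist (vf (clampv R z)) (vf (clampv R w)) \<le> L * dist z w"
  proof (intro exI[of _ "C + 1"] conjI allI)
    fix z w
    have "dist (vf (clampv R z)) (vf (clampv R w)) \<le> C * dist (clampv R z) (clampv R w)"
      using C(2) clampv_box[OF R] by blast
    also have "\<dots> \<le> C * dist z w" using C(1) clampv_lip by (intro mult_left_mono) auto
    also have "\<dots> \<le> (C + 1) * dist z w" by (simp add: algebra_simps)
    finally show "dist (vf (clampv R z)) (vf (clampv R w)) \<le> (C + 1) * dist z w" .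
  qed (use C in simp)
  show "\<exists>B. \<forall>z. norm (vf (clampv R z)) \<le> B"
    using vf_bnd_box[OF R] clampv_box[OF R] by blast
qed

lemma int_deriv:
  fixes g :: "real \<Rightarrow> real \<times> real"
  assumes "continuous_on UNIV g" "u \<ge> 0"
  shows "((\<lambda>v. integral {0..v} g) has_vector_derivative g u) (at u within {0..})"
proof -
  have "((\<lambda>v. integral {0..v} g) has_vector_derivative g u) (at u within {0..u+1})"
    by (rule integral_has_vector_derivative) (use assms in \<open>auto intro: continuous_on_subset\<close>)
  moreover have "at u within {0..u+1} = at u within {0..}"
    by (rule at_within_nhd[of _ "{..<u+1}"]) auto
  ultimately show ?thesis by simp
qed

lemma int_cont:
  fixes g :: "real \<Rightarrow> real \<times> real"
  assumes "continuous_on UNIV g"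
  shows "continuous_on {0..} (\<lambda>v. integral {0..v} g)"
proof (rule continuous_on_eq_continuous_within[THEN iffD2], rule ballI)
  fix u :: real assume "u \<in> {0..}"
  then have "u \<ge> 0" by simp
  then show "continuous (at u within {0..}) (\<lambda>v. integral {0..v} g)"
    by (rule has_vector_derivative_continuous[OF int_deriv[OF assms]])
qed

lemma int_exp: fixes a m C :: real assumes "a > 0" "m \<ge> 0"
  shows "integral {0..m} (\<lambda>s. C * exp (a * s)) = C * (exp (a * m) - 1) / a"
proof -
  have H: "((\<lambda>s. C * exp (a * s)) has_integral ((\<lambda>s. C * exp (a * s) / a) m - (\<lambda>s. C * exp (a * s) / a) 0)) {0..m}"
  proof (rule fundamental_theorem_of_calculus[OF assms(2)])
    fix x assume "x \<in> {0..m}"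
    show "((\<lambda>s. C * exp (a * s) / a) has_vector_derivative C * exp (a * x)) (at x within {0..m})"
      unfolding has_real_derivative_iff_has_vector_derivative[symmetric]
      using assms by (auto intro!: derivative_eq_intros)
  qed
  have "integral {0..m} (\<lambda>s. C * exp (a * s)) = (\<lambda>s. C * exp (a * s) / a) m - (\<lambda>s. C * exp (a * s) / a) 0"
    by (rule integral_unique[OF H])
  also have "\<dots> = C * (exp (a * m) - 1) / a" by (simp add: diff_divide_distrib right_diff_distrib)
  finally show ?thesis .
qed

lemma picard:
  fixes F :: "real \<times> real \<Rightarrow> real \<times> real" and z0 :: "real \<times> real"
  assumes lip: "\<And>z w. dist (F z) (F w) \<le> L * dist z w" and L: "L > 0" and bnd: "\<And>z. norm (F z) \<le> BF"
  shows "\<exists>\<phi>. (\<forall>t\<ge>0. (\<phi> has_vector_derivative F (\<phi> t)) (at t within {0..})) \<and> \<phi> 0 = z0"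
proof -
  define a where "a = 2 * L"
  have a: "a > 0" using L by (simp add: a_def)
  have Fc: "continuous_on UNIV F"
    by (rule lipschitz_on_continuous_on[of L]) (rule lipschitz_onI, use lip L in auto)
  have BF: "BF \<ge> 0" using bnd[of 0] norm_ge_zero order_trans by blast
  define g where "g \<psi> s = F (exp (a * s) *\<^sub>R apply_bcontfun \<psi> s)" for \<psi> :: "real \<Rightarrow>\<^sub>C (real \<times> real)" and s
  have gc: "continuous_on UNIV (g \<psi>)" for \<psi>
    unfolding g_def by (intro continuous_on_compose2[OF Fc] continuous_intros) auto
  have gb: "norm (g \<psi> s) \<le> BF" for \<psi> s unfolding g_def by (rule bnd)
  define \<Phi> where "\<Phi> \<psi> t = exp (- a * max t 0) *\<^sub>R (z0 + integral {0..max t 0} (g \<psi>))" for \<psi> t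
  have Ib: "norm (integral {0..m} (g \<psi>)) \<le> BF * m" if "m \<ge> 0" for \<psi> m
    using integral_bound[OF that continuous_on_subset[OF gc] gb] by simp
  have \<Phi>b: "\<Phi> \<psi> \<in> bcontfun" for \<psi>
  proof (rule bcontfun_normI)
    have "continuous_on UNIV (\<lambda>t. integral {0..max t 0} (g \<psi>))"
      by (rule continuous_on_compose2[OF int_cont[OF gc]]) (auto intro!: continuous_intros)
    then show "continuous_on UNIV (\<Phi> \<psi>)" unfolding \<Phi>_def by (intro continuous_intros)
    fix t :: real
    define m where "m = max t 0"
    have m: "m \<ge> 0" by (simp add: m_def)
    have em: "m * exp (- a * m) \<le> 1 / a"
    proof -
      have "a * m \<le> exp (a * m)" using exp_ge_add_one_self[of "a*m"] by linarith
      then have "a * m * exp (- a * m) \<le> exp (a * m) * exp (- a * m)"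
        by (intro mult_right_mono) auto
      also have "\<dots> = 1" by (simp flip: exp_add)
      finally show ?thesis using a by (simp add: field_simps)
    qed
    have "norm (\<Phi> \<psi> t) = exp (- a * m) * norm (z0 + integral {0..m} (g \<psi>))"
      by (simp add: \<Phi>_def m_def)
    also have "\<dots> \<le> exp (- a * m) * (norm z0 + BF * m)"
    proof -
      have "norm (z0 + integral {0..m} (g \<psi>)) \<le> norm z0 + BF * m"
        using norm_triangle_ineq[of z0 "integral {0..m} (g \<psi>)"] Ib[OF m, of \<psi>] by linarith
      then show ?thesis by (intro mult_left_mono) auto
    qed
    also have "\<dots> = exp (- a * m) * norm z0 + BF * (m * exp (- a * m))" by (simp add: algebra_simps)
    also have "\<dots> \<le> 1 * norm z0 + BF * (1 / a)"
      using m a em BF by (intro add_mono mult_right_mono mult_left_mono) auto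
    finally show "norm (\<Phi> \<psi> t) \<le> norm z0 + BF / a" by simp
  qed
  define T where "T \<psi> = Bcontfun (\<Phi> \<psi>)" for \<psi>
  have Tapp: "apply_bcontfun (T \<psi>) = \<Phi> \<psi>" for \<psi> using Bcontfun_inverse[OF \<Phi>b] by (simp add: T_def)
  have contr: "dist (T \<psi>1) (T \<psi>2) \<le> (1/2) * dist \<psi>1 \<psi>2" for \<psi>1 \<psi>2
  proof (rule dist_bound)
    fix t :: real
    define m where "m = max t 0"
    have m: "m \<ge> 0" by (simp add: m_def)
    define D where "D = dist \<psi>1 \<psi>2"
    have int1: "g \<psi> integrable_on {0..m}" for \<psi>
      by (rule integrable_continuous_real) (rule continuous_on_subset[OF gc], simp)
    have pw: "norm (g \<psi>1 s - g \<psi>2 s) \<le> L * D * exp (a * s)" for s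
    proof -
      have "norm (g \<psi>1 s - g \<psi>2 s) \<le> L * dist (exp (a * s) *\<^sub>R apply_bcontfun \<psi>1 s) (exp (a * s) *\<^sub>R apply_bcontfun \<psi>2 s)"
        using lip by (simp add: g_def dist_norm)
      also have "\<dots> = L * (exp (a * s) * dist (apply_bcontfun \<psi>1 s) (apply_bcontfun \<psi>2 s))"
        by (simp add: dist_norm flip: scaleR_diff_right)
      also have "\<dots> \<le> L * (exp (a * s) * D)"
        unfolding D_def using L by (intro mult_left_mono dist_bounded) auto
      finally show ?thesis by (simp add: mult_ac)
    qed
    have "norm (integral {0..m} (\<lambda>s. g \<psi>1 s - g \<psi>2 s)) \<le> integral {0..m} (\<lambda>s. L * D * exp (a * s))"
      by (rule Henstock_Kurzweil_Integration.integral_norm_bound_integral)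
         (auto intro!: integrable_diff int1 integrable_continuous_real continuous_intros continuous_on_subset[OF gc] simp: pw)
    also have "\<dots> = L * D * (exp (a * m) - 1) / a" by (rule int_exp[OF a m])
    finally have ib: "norm (integral {0..m} (g \<psi>1) - integral {0..m} (g \<psi>2)) \<le> L * D * (exp (a * m) - 1) / a"
      using integral_diff[OF int1 int1] by simp
    have "dist (apply_bcontfun (T \<psi>1) t) (apply_bcontfun (T \<psi>2) t)
        = exp (- a * m) * norm (integral {0..m} (g \<psi>1) - integral {0..m} (g \<psi>2))"
      by (simp add: Tapp \<Phi>_def m_def dist_norm flip: scaleR_diff_right)
    also have "\<dots> \<le> exp (- a * m) * (L * D * (exp (a * m) - 1) / a)"
      by (intro mult_left_mono ib) auto
    also have "\<dots> = L * D * (1 - exp (- a * m)) / a"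
      by (simp add: field_simps flip: exp_add)
    also have "\<dots> \<le> L * D * 1 / a"
      using L a by (intro divide_right_mono mult_left_mono) (auto simp: D_def)
    also have "\<dots> = (1/2) * D" using L by (simp add: a_def)
    finally show "dist (apply_bcontfun (T \<psi>1) t) (apply_bcontfun (T \<psi>2) t) \<le> (1/2) * dist \<psi>1 \<psi>2"
      by (simp add: D_def)
  qed
  obtain \<psi> where fix\<psi>: "T \<psi> = \<psi>"
    using banach_fix_type[of "1/2" T] contr by auto
  define \<phi> where "\<phi> t = exp (a * t) *\<^sub>R apply_bcontfun \<psi> t" for t
  have g\<phi>: "g \<psi> s = F (\<phi> s)" for s by (simp add: g_def \<phi>_def)
  have \<phi>eq: "\<phi> t = z0 + integral {0..t} (g \<psi>)" if "t \<ge> 0" for t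
  proof -
    have "apply_bcontfun \<psi> t = \<Phi> \<psi> t" using Tapp[of \<psi>] fix\<psi> by simp
    then show ?thesis using that by (simp add: \<phi>_def \<Phi>_def flip: exp_add)
  qed
  show ?thesis
  proof (intro exI[of _ \<phi>] conjI allI impI)
    fix t :: real assume t: "t \<ge> 0"
    have "((\<lambda>v. z0 + integral {0..v} (g \<psi>)) has_vector_derivative g \<psi> t) (at t within {0..})"
      using int_deriv[OF gc t] by (auto intro!: derivative_eq_intros)
    then have "(\<phi> has_vector_derivative g \<psi> t) (at t within {0..})"
      by (rule has_vector_derivative_transform_within[where d=1]) (use t \<phi>eq in auto)
    then show "(\<phi> has_vector_derivative F (\<phi> t)) (at t within {0..})" by (simp add: g\<phi>)
  next
    show "\<phi> 0 = z0" using \<phi>eq[of 0] by simp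
  qed
qed

lemma in_box:
  assumes "Wf z < M" "M > 0"
  shows "clampv (sqrt M + 1) z = z"
proof -
  have "norm z \<le> sqrt (Wf z)" using W_bounds(1)[of z] by (rule real_le_rsqrt)
  also have "\<dots> < sqrt M" using assms by (simp add: real_sqrt_less_mono)
  finally have n: "norm z < sqrt M + 1" by simp
  show ?thesis by (rule clampv_id) (use n abs_fst_le[of z] abs_snd_le[of z] in linarith)+
qed

lemma exists_sol: "\<exists>\<phi>. is_solution \<phi> \<and> \<phi> 0 = z0"
proof -
  define M where "M = Wf z0 + 1"
  have M: "M > 0" "Wf z0 < M" using W_nonneg[of z0] by (auto simp: M_def)
  define R where "R = sqrt M + 1"
  have R: "R \<ge> 0" using M by (simp add: R_def)
  obtain L where L: "L > 0" "\<And>z w. dist (vf (clampv R z)) (vf (clampv R w)) \<le> L * dist z w"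
    using F_props(1)[OF R] by blast
  obtain BF where BF: "\<And>z. norm (vf (clampv R z)) \<le> BF"
    using F_props(2)[OF R] by blast
  obtain \<phi> where \<phi>: "\<And>t. t \<ge> 0 \<Longrightarrow> (\<phi> has_vector_derivative vf (clampv R (\<phi> t))) (at t within {0..})"
    "\<phi> 0 = z0"
    using picard[of "\<lambda>z. vf (clampv R z)" L BF z0] L BF by blast
  have below: "Wf (\<phi> t) \<le> Wf (\<phi> 0)" if t: "t \<ge> 0" for t
  proof (rule stay_below[where g="\<lambda>t. Wf (\<phi> t)" and g'="\<lambda>t. DWs (\<phi> t) (vf (clampv R (\<phi> t)))" and B=M])
    show "((\<lambda>t. Wf (\<phi> t)) has_real_derivative DWs (\<phi> t) (vf (clampv R (\<phi> t)))) (at t within {0..})"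
      if "t \<ge> 0" for t
      by (rule chain_W[OF \<phi>(1)[OF that] DWs(1)])
    show "DWs (\<phi> t) (vf (clampv R (\<phi> t))) \<le> 0" if "t \<ge> 0" "Wf (\<phi> t) < M" for t
    proof -
      have "clampv R (\<phi> t) = \<phi> t" unfolding R_def by (rule in_box[OF that(2) M(1)])
      then have e: "DWs (\<phi> t) (vf (clampv R (\<phi> t))) = DWs (\<phi> t) (vf (\<phi> t))" by simp
      have "0 \<le> norm (\<phi> t) ^ 8" by simp
      then show ?thesis using DWs(2)[of "\<phi> t"] e by linarith
    qed
  qed (use M \<phi>(2) t in auto)
  show ?thesis
  proof (intro exI[of _ \<phi>] conjI)
    show "is_solution \<phi>" unfolding is_solution_def
    proof (intro allI impI)
      fix t :: real assume t: "t \<ge> 0"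
      have "Wf (\<phi> t) < M" using below[OF t] M \<phi>(2) by simp
      then have "clampv R (\<phi> t) = \<phi> t" unfolding R_def by (rule in_box[OF _ M(1)])
      then show "(\<phi> has_vector_derivative vf (\<phi> t)) (at t within {0..})" using \<phi>(1)[OF t] by simp
    qed
  qed (rule \<phi>(2))
qed

lemma GAS: globally_asymptotically_stable
  unfolding globally_asymptotically_stable_def
  using exists_sol stable converge by blast

theorem theorem1:
  shows "globally_asymptotically_stable \<and>
    \<not> (\<exists>p S. open S \<and> (0,0) \<in> S \<and> real_analytic_on p S \<and> p (0,0) = 0 \<and>
          (\<forall>z\<in>S - {(0,0)}. p z > 0 \<and> frechet_derivative p (at z) (vf z) < 0))"
  using GAS no_analytic by blast

end
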